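(* Let $K$ be a ramified quadratic extension of $\mathbb{Q}_2$ with ring of integers $\mathcal{O}$ and uniformizer $\pi$ as specified in the context, and let $d=2m$ with $m$ odd, $m\ge3$. Let $r\ge 0$ be an integer. (1) If $a_1=\pi^r u_1$, $a_2=\pi^r u_2$ with $u_1,u_2$ units whose $\pi$-coefficients differ, then for each $e\in\{0,1\}$ there exist units $b_1,b_2\in\mathcal{O}$ with $a_1b_1^d+a_2b_2^d=\pi^{r+1}w$, where $w$ is a unit with $\pi$-coefficient $e$. (2) If $a_1=\pi^r u_1$, $a_2=\pi^r u_2$ with $u_1,u_2$ units having the same $\pi$-coefficient, then there exist units $b_1,b_2\in\mathcal{O}$ with $\mathrm{ord}_\pi(a_1b_1^d+a_2b_2^d)=r+2$. (3) Under the hypothesis of (2), there exist units $b_1,b_2\in\mathcal{O}$ with $\mathrm{ord}_\pi(a_1b_1^d+a_2b_2^d)\ge r+3$ (where $\mathrm{ord}_\pi(0)=\infty$). (4) Suppose $K\in\{\mathbb{Q}_2(\sqrt{-1}),\mathbb{Q}_2(\sqrt{-5})\}$. If $a_1,a_2,a_3$ are of the form $a_i=\pi^r u_i$ with units $u_i$ all having the same $\pi$-coefficient, then there are indices $i\neq j$ in $\{1,2,3\}$ and units $b_i,b_j\in\mathcal{O}$ with $\mathrm{ord}_\pi(a_ib_i^d+a_jb_j^d)\ge r+4$. (5) Suppose $K\in\{\mathbb{Q}_2(\sqrt{2}),\mathbb{Q}_2(\sqrt{10}),\mathbb{Q}_2(\sqrt{-2}),\mathbb{Q}_2(\sqrt{-10})\}$.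 If $a_1,a_2,a_3$ are of the form $a_i=\pi^r u_i$ with units $u_i$ all having the same $\pi$-coefficient $c$, then there are indices $i\neq j$ in $\{1,2,3\}$ and units $b_i,b_j\in\mathcal{O}$ with $a_ib_i^d+a_jb_j^d=\pi^{r+2}w$, where $w$ is a unit whose $\pi$-coefficient is $c$.
   Context: $K$ is one of the six ramified quadratic extensions of $\mathbb{Q}_2$, with uniformizer $\pi$ chosen as follows: $\pi=\sqrt{2}$ for $\mathbb{Q}_2(\sqrt2)$, $\pi=\sqrt{-2}$ for $\mathbb{Q}_2(\sqrt{-2})$, $\pi=\sqrt{10}$ for $\mathbb{Q}_2(\sqrt{10})$, $\pi=\sqrt{-10}$ for $\mathbb{Q}_2(\sqrt{-10})$, $\pi=1+\sqrt{-1}$ for $\mathbb{Q}_2(\sqrt{-1})$, $\pi=1+\sqrt{-5}$ for $\mathbb{Q}_2(\sqrt{-5})$. Every unit $u\in\mathcal{O}$ has a unique expansion $u=c_0+c_1\pi+c_2\pi^2+\cdots$ with all $c_k\in\{0,1\}$ and $c_0=1$; $c_1$ is called the $\pi$-coefficient of $u$. *)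

theory Defs
  imports "HOL-Algebra.Ring" "HOL-Algebra.Divisibility" "HOL-Library.Extended_Nat"
begin

datatype qfield = Q2_sqrt2 | Q2_sqrtm2 | Q2_sqrt10 | Q2_sqrtm10 | Q2_sqrtm1 | Q2_sqrtm5

text \<open>The uniformizer pi satisfies pi^2 = tr K * pi - nm K (its minimal polynomial
  x^2 - tr K x + nm K is Eisenstein), and the ring of integers is Z_2[pi] = Z_2 + Z_2 pi.
  pi = sqrt 2: x^2-2; sqrt(-2): x^2+2; sqrt 10: x^2-10; sqrt(-10): x^2+10;
  1+sqrt(-1): x^2-2x+2; 1+sqrt(-5): x^2-2x+6.\<close>
fun tr :: "qfield \<Rightarrow> int" where
  "tr Q2_sqrt2 = 0" | "tr Q2_sqrtm2 = 0" | "tr Q2_sqrt10 = 0" | "tr Q2_sqrtm10 = 0"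
| "tr Q2_sqrtm1 = 2" | "tr Q2_sqrtm5 = 2"

fun nm :: "qfield \<Rightarrow> int" where
  "nm Q2_sqrt2 = -2" | "nm Q2_sqrtm2 = 2" | "nm Q2_sqrt10 = -10" | "nm Q2_sqrtm10 = 10"
| "nm Q2_sqrtm1 = 2" | "nm Q2_sqrtm5 = 6"

text \<open>An element alpha + beta*pi of O, with alpha, beta 2-adic integers, is represented by the
  compatible sequence of its truncations: s n = (alpha mod 2^n, beta mod 2^n).
  This is the inverse limit of the rings O / 2^n O = (Z/2^n)[pi].\<close>
type_synonym oelt = "nat \<Rightarrow> int \<times> int"

definition ocarrier :: "oelt set" where
  "ocarrier = {s. \<forall>n. fst (s n) \<in> {0..<2^n} \<and> snd (s n) \<in> {0..<2^n}
       \<and> fst (s (Suc n)) mod 2^n = fst (s n) \<and> snd (s (Suc n)) mod 2^n = snd (s n)}"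

definition oadd :: "oelt \<Rightarrow> oelt \<Rightarrow> oelt" where
  "oadd s t = (\<lambda>n. ((fst (s n) + fst (t n)) mod 2^n, (snd (s n) + snd (t n)) mod 2^n))"

definition omul :: "qfield \<Rightarrow> oelt \<Rightarrow> oelt \<Rightarrow> oelt" where
  "omul K s t = (\<lambda>n. let a = fst (s n); b = snd (s n); c = fst (t n); d = snd (t n) in
      ((a * c - nm K * b * d) mod 2^n, (a * d + b * c + tr K * b * d) mod 2^n))"

definition ORing :: "qfield \<Rightarrow> oelt ring" where
  "ORing K = \<lparr>carrier = ocarrier, monoid.mult = omul K, monoid.one = (\<lambda>n. (1 mod 2^n, 0)),
              ring.zero = (\<lambda>n. (0, 0)), ring.add = oadd\<rparr>"

definition opi :: oelt where
  "opi = (\<lambda>n. (0, 1 mod 2^n))"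

text \<open>The pi-coefficient c_1 of a unit u = 1 + c_1 pi + c_2 pi^2 + ...: the unique
  c in {0,1} with u - 1 - c pi divisible by pi^2.\<close>
definition pcoeff :: "qfield \<Rightarrow> oelt \<Rightarrow> nat" where
  "pcoeff K u = (THE c. c \<in> {0,1} \<and> (\<exists>v\<in>carrier (ORing K).
      u = \<one>\<^bsub>ORing K\<^esub> \<oplus>\<^bsub>ORing K\<^esub> (if c = 0 then \<zero>\<^bsub>ORing K\<^esub> else opi)
          \<oplus>\<^bsub>ORing K\<^esub> (opi [^]\<^bsub>ORing K\<^esub> (2::nat)) \<otimes>\<^bsub>ORing K\<^esub> v))"

definition pord :: "qfield \<Rightarrow> oelt \<Rightarrow> enat" where
  "pord K x = Sup {enat k | k. (opi [^]\<^bsub>ORing K\<^esub> k) divides\<^bsub>ORing K\<^esub> x}"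

end

theory Submission
  imports Defs
begin

definition red :: "nat \<Rightarrow> int \<times> int \<Rightarrow> int \<times> int" where
  "red n x = (fst x mod 2^n, snd x mod 2^n)"
definition mulZ :: "qfield \<Rightarrow> int \<times> int \<Rightarrow> int \<times> int \<Rightarrow> int \<times> int" where
  "mulZ K x y = (fst x * fst y - nm K * snd x * snd y,
                   fst x * snd y + snd x * fst y + tr K * snd x * snd y)"
definition addZ :: "int \<times> int \<Rightarrow> int \<times> int \<Rightarrow> int \<times> int" where
  "addZ x y = (fst x + fst y, snd x + snd y)"

lemma red_mulZ_l: "red n (mulZ K (red n a) b) = red n (mulZ K a b)"
proof -
  obtain a1 a2 b1 b2 where ab: "a = (a1,a2)" "b = (b1,b2)" by (cases a, cases b)
  let ?M = "(2::int)^n"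
  have 1: "(a1 mod ?M * b1) mod ?M = (a1*b1) mod ?M" by (simp add: mod_mult_left_eq)
  have 2: "(nm K * (a2 mod ?M) * b2) mod ?M = (nm K*a2*b2) mod ?M" by (metis mod_mult_left_eq mod_mult_right_eq)
  have 3: "(a1 mod ?M * b2) mod ?M = (a1*b2) mod ?M" by (simp add: mod_mult_left_eq)
  have 4: "(a2 mod ?M * b1) mod ?M = (a2*b1) mod ?M" by (simp add: mod_mult_left_eq)
  have 5: "(tr K * (a2 mod ?M) * b2) mod ?M = (tr K*a2*b2) mod ?M" by (metis mod_mult_left_eq mod_mult_right_eq)
  show ?thesis using 1 2 3 4 5 unfolding ab red_def mulZ_def
    by (simp del: mod_mult_left_eq mod_mult_right_eq, intro conjI mod_diff_cong mod_add_cong, auto)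
qed

lemma mulZ_comm: "mulZ K a b = mulZ K b a" by (simp add: mulZ_def algebra_simps)
lemma red_mulZ_r: "red n (mulZ K a (red n b)) = red n (mulZ K a b)"
  by (metis mulZ_comm red_mulZ_l)
lemma mulZ_assoc: "mulZ K (mulZ K a b) c = mulZ K a (mulZ K b c)"
  by (simp add: mulZ_def algebra_simps)
lemma red_addZ_l: "red n (addZ (red n a) b) = red n (addZ a b)"
  by (simp add: red_def addZ_def mod_simps)
lemma red_addZ_r: "red n (addZ a (red n b)) = red n (addZ a b)"
  by (simp add: red_def addZ_def mod_simps)

lemma red_red: "k \<le> n \<Longrightarrow> red k (red n x) = red k x"
  by (simp add: red_def mod_mod_cancel le_imp_power_dvd)

lemma omul_at: "omul K s t n = red n (mulZ K (s n) (t n))"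
  by (simp add: omul_def red_def mulZ_def Let_def)
lemma oadd_at: "oadd s t n = red n (addZ (s n) (t n))"
  by (simp add: oadd_def red_def addZ_def)

lemma mod_self_iff: "(x::int) mod 2^n = x \<longleftrightarrow> x \<in> {0..<2^n}"
proof
  assume "x mod 2^n = x"
  then show "x \<in> {0..<2^n}" by (metis atLeastLessThan_iff pos_mod_bound pos_mod_sign zero_less_numeral zero_less_power)
next
  assume "x \<in> {0..<2^n}" then show "x mod 2^n = x" by simp
qed

lemma ocarrier_iff: "s \<in> ocarrier \<longleftrightarrow> (\<forall>n. red n (s n) = s n) \<and> (\<forall>n. red n (s (Suc n)) = s n)"
  unfolding ocarrier_def red_def
  by (auto simp: prod_eq_iff mod_self_iff simp del: atLeastLessThan_iff)

lemma carrD1: "s \<in> ocarrier \<Longrightarrow> red n (s n) = s n" by (simp add: ocarrier_iff)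
lemma carrD2: "s \<in> ocarrier \<Longrightarrow> red n (s (Suc n)) = s n" by (simp add: ocarrier_iff)
lemma carrD3: assumes "s \<in> ocarrier" "k \<le> n" shows "red k (s n) = s k"
  using assms(2)
proof (induction n)
  case 0 then show ?case using carrD1[OF assms(1)] by simp
next
  case (Suc n)
  show ?case
  proof (cases "k = Suc n")
    case True then show ?thesis using carrD1[OF assms(1)] by simp
  next
    case False
    then have "k \<le> n" using Suc by simp
    then have "red k (s (Suc n)) = red k (red n (s (Suc n)))" by (simp add: red_red)
    also have "\<dots> = s k" using carrD2[OF assms(1)] Suc.IH \<open>k \<le> n\<close> by simp
    finally show ?thesis .
  qed
qed

lemma red_mulZ_both: "red n (mulZ K (red n a) (red n b)) = red n (mulZ K a b)"
  by (simp add: red_mulZ_l red_mulZ_r)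
lemma red_addZ_both: "red n (addZ (red n a) (red n b)) = red n (addZ a b)"
  by (simp add: red_addZ_l red_addZ_r)

lemma omul_closed: "s \<in> ocarrier \<Longrightarrow> t \<in> ocarrier \<Longrightarrow> omul K s t \<in> ocarrier"
  unfolding ocarrier_iff omul_at
  by (metis order.refl red_red red_mulZ_both le_SucI)

lemma oadd_closed: "s \<in> ocarrier \<Longrightarrow> t \<in> ocarrier \<Longrightarrow> oadd s t \<in> ocarrier"
  unfolding ocarrier_iff oadd_at
  by (metis order.refl red_red red_addZ_both le_SucI)

definition celt :: "int \<Rightarrow> int \<Rightarrow> oelt" where "celt a b = (\<lambda>n. red n (a, b))"

lemma celt_closed: "celt a b \<in> ocarrier"
  unfolding ocarrier_iff celt_def by (simp add: red_red)

lemma omul_celt: "omul K (celt a b) (celt c d) = celt (fst (mulZ K (a,b) (c,d))) (snd (mulZ K (a,b) (c,d)))"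
  by (rule ext) (simp add: omul_at celt_def red_mulZ_both)
lemma oadd_celt: "oadd (celt a b) (celt c d) = celt (a + c) (b + d)"
  by (rule ext) (simp add: oadd_at celt_def red_addZ_both, simp add: addZ_def)

definition oneg :: "oelt \<Rightarrow> oelt" where "oneg s = (\<lambda>n. red n (- fst (s n), - snd (s n)))"

lemma red_neg: "red n (- fst (red n a), - snd (red n a)) = red n (- fst a, - snd a)"
  by (simp add: red_def mod_simps)

lemma oneg_closed: "s \<in> ocarrier \<Longrightarrow> oneg s \<in> ocarrier"
  unfolding ocarrier_iff oneg_def
  by (metis order.refl red_red red_neg le_SucI)

lemma ORing_simps [simp]:
  "carrier (ORing K) = ocarrier" "monoid.mult (ORing K) = omul K" "ring.add (ORing K) = oadd"
  "monoid.one (ORing K) = celt 1 0" "ring.zero (ORing K) = celt 0 0"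
  by (auto simp: ORing_def celt_def red_def)

lemma opi_celt: "opi = celt 0 1" by (auto simp: opi_def celt_def red_def)

lemma cring_O: "cring (ORing K)"
proof (rule cringI)
  show "abelian_group (ORing K)"
  proof (rule abelian_groupI, simp_all)
    show "\<And>x y. x \<in> ocarrier \<Longrightarrow> y \<in> ocarrier \<Longrightarrow> oadd x y \<in> ocarrier" by (rule oadd_closed)
    show "celt 0 0 \<in> ocarrier" by (rule celt_closed)
    show "\<And>x y z. oadd (oadd x y) z = oadd x (oadd y z)"
      by (rule ext) (simp add: oadd_at red_addZ_l red_addZ_r, simp add: addZ_def algebra_simps)
    show "\<And>x y. oadd x y = oadd y x"
      by (rule ext) (simp add: oadd_at addZ_def algebra_simps)
    show "\<And>x. x \<in> ocarrier \<Longrightarrow> oadd (celt 0 0) x = x"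
      by (rule ext) (simp add: oadd_at celt_def red_addZ_l carrD1, simp add: addZ_def carrD1)
    show "\<And>x. x \<in> ocarrier \<Longrightarrow> \<exists>y\<in>ocarrier. oadd y x = celt 0 0"
    proof
      fix x assume "x \<in> ocarrier"
      show "oneg x \<in> ocarrier" using oneg_closed[OF \<open>x \<in> ocarrier\<close>] .
      show "oadd (oneg x) x = celt 0 0"
        by (rule ext) (simp add: oadd_at oneg_def celt_def red_addZ_l, simp add: addZ_def red_def)
    qed
  qed
  show "comm_monoid (ORing K)"
  proof (rule comm_monoidI, simp_all)
    show "\<And>x y. x \<in> ocarrier \<Longrightarrow> y \<in> ocarrier \<Longrightarrow> omul K x y \<in> ocarrier" by (rule omul_closed)
    show "celt 1 0 \<in> ocarrier" by (rule celt_closed)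
    show "\<And>x y z. omul K (omul K x y) z = omul K x (omul K y z)"
      by (rule ext) (simp add: omul_at red_mulZ_l red_mulZ_r mulZ_assoc)
    show "\<And>x y. omul K x y = omul K y x"
      by (rule ext) (simp add: omul_at mulZ_comm)
    show "\<And>x. x \<in> ocarrier \<Longrightarrow> omul K (celt 1 0) x = x"
      by (rule ext) (simp add: omul_at celt_def red_mulZ_l, simp add: mulZ_def carrD1)
  qed
  show "\<And>x y z. x \<in> carrier (ORing K) \<Longrightarrow> y \<in> carrier (ORing K) \<Longrightarrow> z \<in> carrier (ORing K) \<Longrightarrow>
      (x \<oplus>\<^bsub>ORing K\<^esub> y) \<otimes>\<^bsub>ORing K\<^esub> z = x \<otimes>\<^bsub>ORing K\<^esub> z \<oplus>\<^bsub>ORing K\<^esub> y \<otimes>\<^bsub>ORing K\<^esub> z"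
    by (simp, rule ext) (simp add: omul_at oadd_at red_mulZ_l red_addZ_l red_addZ_r,
        simp add: mulZ_def addZ_def algebra_simps)
qed

lemma tr_even: "even (tr K)" by (cases K) auto
lemma nm_even: "even (nm K)" by (cases K) auto

lemma invL_ex:
  assumes "n = 0 \<or> odd (fst a)"
  shows "\<exists>y. red n y = y \<and> red n (mulZ K a y) = red n (1,0)"
proof (cases "n = 0")
  case True then show ?thesis by (intro exI[of _ "(0,0)"]) (simp add: red_def)
next
  case False
  then have oa: "odd (fst a)" using assms by simp
  obtain a1 a2 where a: "a = (a1,a2)" by (cases a)
  define N where "N = a1 * a1 + tr K * a1 * a2 + nm K * a2 * a2"
  have "odd N" using oa tr_even[of K] nm_even[of K] unfolding N_def a by auto
  then have "coprime N (2^n)" by simp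
  then have "gcd N (2^n) = 1" by simp
  then obtain u v where uv: "u * N + v * 2^n = 1" using bezout_int[of N "2^n"] by metis
  define z where "z = ((a1 + tr K * a2) * u, - a2 * u)"
  have "mulZ K a z = (N * u, 0)" unfolding z_def a N_def mulZ_def by (simp add: algebra_simps)
  also have "N * u = 1 + (- v) * 2^n" using uv by (simp add: algebra_simps)
  finally have "red n (mulZ K a z) = red n (1,0)" by (simp only: red_def mod_mult_self1 fst_conv snd_conv)
  then show ?thesis
    by (intro exI[of _ "red n z"]) (simp add: red_red red_mulZ_r)
qed

lemma mulZ_one: "mulZ K (1,0) y = y" by (simp add: mulZ_def)

lemma invL_uniq:
  assumes "red n y = y" "red n y' = y'" "red n (mulZ K a y) = red n (1,0)" "red n (mulZ K a y') = red n (1,0)"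
  shows "y = y'"
proof -
  have "y = red n (mulZ K (red n (1,0)) y)" using assms(1) by (simp add: red_mulZ_l mulZ_one)
  also have "\<dots> = red n (mulZ K (mulZ K a y') y)" using assms(4) by (metis red_mulZ_l)
  also have "\<dots> = red n (mulZ K y' (mulZ K a y))" by (metis mulZ_assoc mulZ_comm)
  also have "\<dots> = red n (mulZ K y' (red n (1,0)))" using assms(3) by (metis red_mulZ_r)
  also have "\<dots> = red n (mulZ K y' (1,0))" by (rule red_mulZ_r)
  also have "\<dots> = y'" using assms(2) by (simp add: mulZ_def)
  finally show ?thesis .
qed

definition invL :: "qfield \<Rightarrow> nat \<Rightarrow> int \<times> int \<Rightarrow> int \<times> int" where
  "invL K n a = (SOME y. red n y = y \<and> red n (mulZ K a y) = red n (1,0))"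

lemma invL_prop:
  assumes "n = 0 \<or> odd (fst a)"
  shows "red n (invL K n a) = invL K n a \<and> red n (mulZ K a (invL K n a)) = red n (1,0)"
  unfolding invL_def using someI_ex[OF invL_ex[OF assms]] .

lemma carr_odd:
  assumes "x \<in> ocarrier" "odd (fst (x 1))"
  shows "n = 0 \<or> odd (fst (x n))"
proof (cases "n = 0")
  case False
  then have "red 1 (x n) = x 1" using carrD3[OF assms(1), of 1 n] by simp
  then have "fst (x n) mod 2 = fst (x 1)" by (simp add: red_def prod_eq_iff)
  then show ?thesis using assms(2) by (metis even_mod_2_iff)
qed simp

definition oinv :: "qfield \<Rightarrow> oelt \<Rightarrow> oelt" where "oinv K x = (\<lambda>n. invL K n (x n))"

lemma oinv_props:
  assumes "x \<in> ocarrier" "odd (fst (x 1))"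
  shows "oinv K x \<in> ocarrier" "omul K x (oinv K x) = celt 1 0"
proof -
  have P: "\<And>n. red n (invL K n (x n)) = invL K n (x n) \<and> red n (mulZ K (x n) (invL K n (x n))) = red n (1,0)"
    using invL_prop carr_odd[OF assms] by blast
  have "red n (invL K (Suc n) (x (Suc n))) = invL K n (x n)" for n
  proof (rule invL_uniq[where a = "x n" and n = n and K = K])
    show "red n (red n (invL K (Suc n) (x (Suc n)))) = red n (invL K (Suc n) (x (Suc n)))" by (simp add: red_red)
    show "red n (invL K n (x n)) = invL K n (x n)" using P by blast
    show "red n (mulZ K (x n) (invL K n (x n))) = red n (1, 0)" using P by blast
    have "red n (mulZ K (x n) (red n (invL K (Suc n) (x (Suc n)))))
        = red n (mulZ K (red n (x (Suc n))) (invL K (Suc n) (x (Suc n))))"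
      using carrD2[OF assms(1)] by (simp add: red_mulZ_r red_mulZ_l)
    also have "\<dots> = red n (red (Suc n) (mulZ K (x (Suc n)) (invL K (Suc n) (x (Suc n)))))"
      by (simp add: red_mulZ_l red_red)
    also have "\<dots> = red n (1,0)" using P[of "Suc n"] by (simp add: red_red)
    finally show "red n (mulZ K (x n) (red n (invL K (Suc n) (x (Suc n))))) = red n (1, 0)" .
  qed
  then show "oinv K x \<in> ocarrier" using P unfolding ocarrier_iff oinv_def by simp
  show "omul K x (oinv K x) = celt 1 0"
    by (rule ext) (simp add: omul_at oinv_def celt_def P)
qed

lemma omul_comm_at: "omul K x y = omul K y x"
  by (rule ext) (simp add: omul_at mulZ_comm)

lemma Units_iff: "x \<in> Units (ORing K) \<longleftrightarrow> x \<in> ocarrier \<and> odd (fst (x 1))"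
proof
  assume "x \<in> Units (ORing K)"
  then obtain y where xy: "x \<in> ocarrier" "y \<in> ocarrier" "omul K y x = celt 1 0" unfolding Units_def by auto
  then have "red 1 (mulZ K (y 1) (x 1)) = red 1 (1,0)" by (metis omul_at celt_def)
  then have "(fst (y 1) * fst (x 1) - nm K * snd (y 1) * snd (x 1)) mod 2 = 1"
    by (simp add: red_def mulZ_def prod_eq_iff)
  then show "x \<in> ocarrier \<and> odd (fst (x 1))" using xy(1) nm_even[of K]
    by (metis dvd_mult dvd_mult2 dvd_diff even_mod_2_iff odd_one)
next
  assume a: "x \<in> ocarrier \<and> odd (fst (x 1))"
  interpret cring "ORing K" by (rule cring_O)
  show "x \<in> Units (ORing K)" unfolding Units_def
    using oinv_props[OF conjunct1[OF a] conjunct2[OF a], of K] a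
    by (auto intro!: bexI[of _ "oinv K x"] simp: omul_comm_at)
qed

lemma omul_assoc: "omul K (omul K x y) z = omul K x (omul K y z)"
  by (rule ext) (simp add: omul_at red_mulZ_l red_mulZ_r mulZ_assoc)
lemma omul_left_commute: "omul K x (omul K y z) = omul K y (omul K x z)"
  by (metis omul_assoc omul_comm_at)
lemma oadd_assoc: "oadd (oadd x y) z = oadd x (oadd y z)"
  by (rule ext) (simp add: oadd_at red_addZ_l red_addZ_r, simp add: addZ_def algebra_simps)
lemma oadd_comm: "oadd x y = oadd y x"
  by (rule ext) (simp add: oadd_at addZ_def algebra_simps)
lemma oadd_left_commute: "oadd x (oadd y z) = oadd y (oadd x z)"
  by (metis oadd_assoc oadd_comm)
lemma omul_distrib: "omul K x (oadd y z) = oadd (omul K x y) (omul K x z)"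
  by (rule ext) (simp add: omul_at oadd_at red_mulZ_r red_addZ_l red_addZ_r,
        simp add: mulZ_def addZ_def algebra_simps)
lemmas o_ac = omul_assoc omul_comm_at omul_left_commute oadd_assoc oadd_comm oadd_left_commute

lemma omul_one: "x \<in> ocarrier \<Longrightarrow> omul K x (celt 1 0) = x"
  by (rule ext) (simp add: omul_at celt_def red_mulZ_r, simp add: mulZ_def carrD1)

lemma celt_at: "celt a b n = red n (a,b)" by (simp add: celt_def)
lemma opi_closed: "opi \<in> ocarrier" by (simp add: opi_celt celt_closed)

lemma even_carr:
  assumes "x \<in> ocarrier" "fst (x 1) = 0" shows "even (fst (x (Suc n)))"
proof -
  have "red 1 (x (Suc n)) = x 1" using carrD3[OF assms(1), of 1 "Suc n"] by simp
  then have "fst (x (Suc n)) mod 2 = 0" using assms(2) by (simp add: red_def prod_eq_iff)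
  then show ?thesis by presburger
qed

lemma half_compat:
  fixes a b :: int
  assumes "a mod 2^(Suc n) = b" "even a"
  shows "(a div 2) mod 2^n = b div 2"
proof -
  obtain a' where a: "a = 2 * a'" using assms(2) by blast
  have "b = 2 * (a' mod 2^n)" using assms(1) unfolding a by (simp add: mod_mult_mult1)
  then show ?thesis unfolding a by simp
qed

lemma half_bound: "0 \<le> (a::int) \<and> a < 2 * M \<Longrightarrow> a div 2 < M" by linarith

lemma red01: "red 2 (0,1) = (0,1)" by (simp add: red_def)

lemma div_pi:
  assumes x: "x \<in> ocarrier" and x1: "fst (x 1) = 0"
  shows "\<exists>y\<in>ocarrier. x = omul K opi y"
proof -
  define A where "A = (\<lambda>n. (fst (x n), 0::int))"
  define B where "B = (\<lambda>n. (snd (x n), 0::int))"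
  define H where "H = (\<lambda>n. (fst (x (Suc n)) div 2, 0::int))"
  define eta where "eta = celt (- nm K div 2) (tr K div 2)"
  define ei where "ei = oinv K eta"
  have ev: "even (fst (x (Suc n)))" for n using even_carr[OF x x1] .
  have A: "A \<in> ocarrier" using x unfolding ocarrier_iff A_def by (simp add: red_def prod_eq_iff)
  have B: "B \<in> ocarrier" using x unfolding ocarrier_iff B_def by (simp add: red_def prod_eq_iff)
  have H: "H \<in> ocarrier"
    unfolding ocarrier_iff
  proof (intro conjI allI)
    fix n
    have "fst (x (Suc n)) \<in> {0..<2^Suc n}" using carrD1[OF x, of "Suc n"]
      by (metis fst_conv mod_self_iff red_def)
    then show "red n (H n) = H n" unfolding H_def red_def by (simp add: mod_self_iff half_bound)
    have "fst (x (Suc (Suc n))) mod 2^Suc n = fst (x (Suc n))"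
      using carrD2[OF x, of "Suc n"] by (simp add: red_def prod_eq_iff)
    then show "red n (H (Suc n)) = H n" unfolding H_def red_def using half_compat ev by simp
  qed
  have eta: "eta \<in> ocarrier" "odd (fst (eta 1))" unfolding eta_def
    by (simp add: celt_closed) (cases K, simp_all add: celt_def red_def)
  have ei: "ei \<in> ocarrier" "omul K eta ei = celt 1 0" unfolding ei_def using oinv_props[OF eta] by auto
  have e1: "x = oadd A (omul K B opi)"
  proof (rule ext)
    fix n show "x n = oadd A (omul K B opi) n"
      unfolding oadd_at omul_at A_def B_def opi_celt celt_at
      by (simp add: red_mulZ_r, simp add: red_addZ_r, simp add: mulZ_def addZ_def carrD1[OF x])
  qed
  have e2: "A = omul K (celt 2 0) H"
  proof (rule ext)
    fix n
    have "2 * (fst (x (Suc n)) div 2) = fst (x (Suc n))" using ev by simp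
    moreover have "fst (x (Suc n)) mod 2^n = fst (x n)" using carrD2[OF x, of n] by (simp add: red_def prod_eq_iff)
    ultimately show "A n = omul K (celt 2 0) H n"
      unfolding omul_at A_def H_def celt_at
      by (simp add: red_mulZ_l, simp add: mulZ_def red_def)
  qed
  have e3: "omul K (celt 2 0) eta = omul K opi opi"
    unfolding eta_def opi_celt omul_celt by (cases K) (simp_all add: mulZ_def)
  have two: "celt 2 0 = omul K (omul K opi opi) ei"
  proof -
    have "celt 2 0 = omul K (celt 2 0) (omul K eta ei)" using ei(2) omul_one[OF celt_closed] by simp
    also have "\<dots> = omul K (omul K opi opi) ei" using e3 by (metis omul_assoc)
    finally show ?thesis .
  qed
  have "x = omul K opi (oadd (omul K (omul K opi ei) H) B)"
    unfolding e1 e2 two omul_distrib by (simp add: o_ac)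
  moreover have "oadd (omul K (omul K opi ei) H) B \<in> ocarrier"
    by (intro oadd_closed omul_closed opi_closed ei H B)
  ultimately show ?thesis by blast
qed

lemma int4_cases: "(c::int) \<in> {0..<4} \<Longrightarrow> c = 0 \<or> c = 1 \<or> c = 2 \<or> c = 3" by auto

lemma carr2:
  assumes "y \<in> ocarrier"
  obtains c d where "y 2 = (c,d)" "c \<in> {0,1,2,3}" "d \<in> {0,1,2,3}"
proof -
  have "red 2 (y 2) = y 2" using carrD1[OF assms] .
  then have "fst (y 2) \<in> {0..<4}" "snd (y 2) \<in> {0..<4}"
    by (metis fst_conv snd_conv mod_self_iff red_def power2_eq_square numeral_times_numeral semiring_norm(12) semiring_norm(13))+
  then show ?thesis using that int4_cases by (metis insert_iff prod.collapse)
qed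

lemma lvl1: "y \<in> ocarrier \<Longrightarrow> y 1 = red 1 (y 2)" using carrD3[of y 1 2] by simp

definition piq :: "int \<times> int \<Rightarrow> int \<times> int" where "piq X = (snd X mod 2, fst X div 2)"
definition pi2q :: "qfield \<Rightarrow> int \<times> int \<Rightarrow> int \<times> int" where
  "pi2q K X = (fst X div 2, (snd X div 2 - (tr K div 2) * (fst X div 2)) mod 2)"

lemma quot_pi:
  assumes "y \<in> ocarrier" "x = omul K opi y"
  shows "y 1 = piq (x 2)"
proof -
  obtain c d where cd: "y 2 = (c,d)" "c \<in> {0,1,2,3}" "d \<in> {0,1,2,3}" using carr2[OF assms(1)] .
  have "x 2 = red 2 (mulZ K (0,1) (c,d))" unfolding assms(2) omul_at opi_celt celt_at cd(1)
    by (simp add: red_mulZ_l)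
  then show ?thesis using cd lvl1[OF assms(1)]
    by (cases K) (auto simp: piq_def red_def mulZ_def)
qed

lemma quot_pi2:
  assumes "y \<in> ocarrier" "x = omul K (omul K opi opi) y"
  shows "y 1 = pi2q K (x 2)"
proof -
  obtain c d where cd: "y 2 = (c,d)" "c \<in> {0,1,2,3}" "d \<in> {0,1,2,3}" using carr2[OF assms(1)] .
  have "x 2 = red 2 (mulZ K (mulZ K (0,1) (0,1)) (c,d))" unfolding assms(2) omul_at opi_celt celt_at cd(1)
    by (simp add: red_mulZ_l red01)
  then show ?thesis using cd lvl1[OF assms(1)]
    by (cases K) (auto simp: pi2q_def red_def mulZ_def)
qed

lemma div_pi2:
  assumes x: "x \<in> ocarrier" and x1: "x 1 = (0,0)"
  shows "\<exists>w\<in>ocarrier. x = omul K (omul K opi opi) w"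
proof -
  obtain y where y: "y \<in> ocarrier" "x = omul K opi y" using div_pi[OF x, of K] x1 by auto
  have "y 1 = piq (x 2)" using quot_pi[OF y] .
  moreover have "red 1 (x 2) = (0,0)" using x1 lvl1[OF x] by simp
  ultimately have "fst (y 1) = 0" by (simp add: piq_def red_def prod_eq_iff)
  then obtain w where w: "w \<in> ocarrier" "y = omul K opi w" using div_pi[OF y(1), of K] by auto
  then show ?thesis using y by (auto simp: omul_assoc)
qed

lemma oadd_zero: "x \<in> ocarrier \<Longrightarrow> oadd x (celt 0 0) = x"
  by (rule ext) (simp add: oadd_at celt_def red_addZ_r, simp add: addZ_def carrD1)
lemma oadd_oneg: "oadd x (oneg x) = celt 0 0"
  by (rule ext) (simp add: oadd_at oneg_def celt_def red_addZ_r, simp add: addZ_def red_def)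
lemma omul_oneg: "omul K p (oneg b) = oneg (omul K p b)"
proof (rule ext)
  fix n
  have "omul K p (oneg b) n = red n (mulZ K (p n) (- fst (b n), - snd (b n)))"
    by (simp add: omul_at oneg_def red_mulZ_r)
  also have "\<dots> = red n (- fst (mulZ K (p n) (b n)), - snd (mulZ K (p n) (b n)))"
    by (simp add: mulZ_def algebra_simps)
  also have "\<dots> = oneg (omul K p b) n" by (simp add: oneg_def omul_at red_neg)
  finally show "omul K p (oneg b) n = oneg (omul K p b) n" .
qed
lemma omul_zero: "omul K p (celt 0 0) = celt 0 0"
  by (rule ext) (simp add: omul_at celt_def red_mulZ_r, simp add: mulZ_def red_def)

lemma nm_half: "nm K = 2 * (nm K div 2) \<and> odd (nm K div 2)" by (cases K) simp_all

lemma pi_cancel: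
  assumes z: "z \<in> ocarrier" and e: "omul K opi z = celt 0 0"
  shows "z = celt 0 0"
proof (rule ext)
  fix n
  obtain c d where cd: "z (Suc n) = (c,d)" by (cases "z (Suc n)")
  have "red (Suc n) (mulZ K (0,1) (c,d)) = (0,0)"
    using fun_cong[OF e, of "Suc n"] by (simp add: omul_at opi_celt celt_at red_mulZ_l cd, simp add: red_def)
  then have h1: "(- nm K * d) mod 2^Suc n = 0" and h2: "(c + tr K * d) mod 2^Suc n = 0"
    by (simp_all add: red_def mulZ_def prod_eq_iff)
  define h where "h = nm K div 2"
  have hh: "nm K = 2 * h" "odd h" using nm_half[of K] unfolding h_def by auto
  have "(2::int)^Suc n dvd (- nm K * d)" using h1 by (simp only: mod_eq_0_iff_dvd)
  then have "2 * 2^n dvd 2 * (- h * d)" using hh(1) by (simp add: algebra_simps)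
  then have "(2::int)^n dvd (- h * d)" by simp
  then have "(2::int)^n dvd h * d" by simp
  moreover have "coprime ((2::int)^n) h" using hh(2) by simp
  ultimately have dd: "(2::int)^n dvd d" using coprime_dvd_mult_right_iff by blast
  have "(2::int)^Suc n dvd (c + tr K * d)" using h2 by (simp only: mod_eq_0_iff_dvd)
  moreover have "(2::int)^n dvd 2^Suc n" by (simp add: le_imp_power_dvd)
  ultimately have "(2::int)^n dvd (c + tr K * d)" using dvd_trans by blast
  moreover have "(2::int)^n dvd tr K * d" using dd by simp
  ultimately have cc: "(2::int)^n dvd c" using dvd_add_left_iff by blast
  have "z n = red n (z (Suc n))" using carrD2[OF z] by simp
  also have "\<dots> = (0,0)" using cc dd cd by (simp add: red_def)
  finally show "z n = celt 0 0 n" by (simp add: celt_at red_def)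
qed

lemma opi_pow_closed: "opi [^]\<^bsub>ORing K\<^esub> (k::nat) \<in> ocarrier"
proof -
  interpret cring "ORing K" by (rule cring_O)
  show ?thesis using nat_pow_closed[of opi k] opi_closed by simp
qed

lemma pow_cancel0:
  assumes "z \<in> ocarrier" "omul K (opi [^]\<^bsub>ORing K\<^esub> (k::nat)) z = celt 0 0"
  shows "z = celt 0 0"
  using assms
proof (induction k arbitrary: z)
  case 0
  then show ?case using omul_one[of z K] by (simp add: omul_comm_at)
next
  case (Suc k)
  have "omul K (opi [^]\<^bsub>ORing K\<^esub> k) (omul K opi z) = celt 0 0"
    using Suc.prems(2) by (simp add: omul_assoc)
  then have "omul K opi z = celt 0 0" using Suc.IH omul_closed[OF opi_closed Suc.prems(1)] by blast
  then show ?case using pi_cancel Suc.prems(1) by blast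
qed

lemma pow_cancel:
  assumes a: "a \<in> ocarrier" and b: "b \<in> ocarrier"
    and e: "omul K (opi [^]\<^bsub>ORing K\<^esub> (k::nat)) a = omul K (opi [^]\<^bsub>ORing K\<^esub> k) b"
  shows "a = b"
proof -
  let ?P = "opi [^]\<^bsub>ORing K\<^esub> k"
  have "omul K ?P (oadd a (oneg b)) = celt 0 0"
    by (simp add: omul_distrib omul_oneg e oadd_oneg)
  then have "oadd a (oneg b) = celt 0 0"
    using pow_cancel0 oadd_closed[OF a oneg_closed[OF b]] by blast
  then have "oadd (oadd a (oneg b)) b = oadd (celt 0 0) b" by simp
  then show ?thesis
    using oadd_zero[OF a] oadd_zero[OF b] oadd_oneg[of b]
    by (simp add: oadd_assoc oadd_comm[of "oneg b" b]) (metis oadd_comm)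
qed

lemma pord_ge:
  assumes "y \<in> ocarrier"
  shows "enat k \<le> pord K (omul K (opi [^]\<^bsub>ORing K\<^esub> k) y)"
  unfolding pord_def
  by (rule Sup_upper) (use assms in \<open>auto simp: factor_def\<close>)

lemma pi_pow_Suc: "opi [^]\<^bsub>ORing K\<^esub> (Suc k) = omul K opi (opi [^]\<^bsub>ORing K\<^esub> k)"
  by (simp add: omul_comm_at)

lemma pow_split: "opi [^]\<^bsub>ORing K\<^esub> ((k::nat) + (j::nat)) = omul K (opi [^]\<^bsub>ORing K\<^esub> k) (opi [^]\<^bsub>ORing K\<^esub> j)"
proof (induction j)
  case 0 then show ?case using omul_one[OF opi_pow_closed] by simp
next
  case (Suc j) then show ?case by (simp add: omul_assoc)
qed

lemma pord_eq:
  assumes w: "w \<in> Units (ORing K)"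
  shows "pord K (omul K (opi [^]\<^bsub>ORing K\<^esub> k) w) = enat k"
proof (rule antisym)
  have wc: "w \<in> ocarrier" "odd (fst (w 1))" using w Units_iff by auto
  show "enat k \<le> pord K (omul K (opi [^]\<^bsub>ORing K\<^esub> k) w)" using pord_ge[OF wc(1)] .
  show "pord K (omul K (opi [^]\<^bsub>ORing K\<^esub> k) w) \<le> enat k"
    unfolding pord_def
  proof (rule Sup_least)
    fix e assume "e \<in> {enat j |j. opi [^]\<^bsub>ORing K\<^esub> j divides\<^bsub>ORing K\<^esub> omul K (opi [^]\<^bsub>ORing K\<^esub> k) w}"
    then obtain j c where ej: "e = enat j" "c \<in> ocarrier"
      "omul K (opi [^]\<^bsub>ORing K\<^esub> k) w = omul K (opi [^]\<^bsub>ORing K\<^esub> j) c"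
      by (auto simp: factor_def)
    show "e \<le> enat k"
    proof (rule ccontr)
      assume "\<not> e \<le> enat k"
      then have "j \<ge> Suc k" using ej by simp
      then obtain i where j: "j = k + Suc i" by (metis le_Suc_ex add_Suc_right add_Suc)
      have "omul K (opi [^]\<^bsub>ORing K\<^esub> k) w = omul K (opi [^]\<^bsub>ORing K\<^esub> k) (omul K opi (omul K (opi [^]\<^bsub>ORing K\<^esub> i) c))"
        using ej(3) unfolding j pow_split pi_pow_Suc by (simp add: omul_assoc)
      then have "w = omul K opi (omul K (opi [^]\<^bsub>ORing K\<^esub> i) c)"
        using pow_cancel wc(1) omul_closed[OF opi_closed omul_closed[OF opi_pow_closed ej(2)]] by blast
      then have "w 1 = red 1 (mulZ K (0,1) (omul K (opi [^]\<^bsub>ORing K\<^esub> i) c 1))"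
        by (simp add: omul_at opi_celt celt_at red_mulZ_l)
      then have "fst (w 1) = (- nm K * snd (omul K (opi [^]\<^bsub>ORing K\<^esub> i) c 1)) mod 2"
        by (simp add: red_def mulZ_def)
      then have "even (fst (w 1))" using nm_even[of K] by (simp add: even_mod_2_iff)
      then show False using wc(2) by simp
    qed
  qed
qed

definition UB :: "(int \<times> int) set" where
  "UB = {(1,0),(1,1),(1,2),(1,3),(3,0),(3,1),(3,2),(3,3)}"
definition BS :: "(int \<times> int) set" where "BS = {(1,0),(1,1)}"
definition sL :: "qfield \<Rightarrow> int \<times> int \<Rightarrow> int \<times> int \<Rightarrow> int \<times> int \<Rightarrow> int \<times> int \<Rightarrow> int \<times> int" where
  "sL K U1 U2 B1 B2 = red 2 (addZ (mulZ K U1 (mulZ K B1 B1)) (mulZ K U2 (mulZ K B2 B2)))"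

lemma F1: "\<forall>U1\<in>UB. \<forall>U2\<in>UB. \<forall>e\<in>{0,1}. snd U1 mod 2 \<noteq> snd U2 mod 2 \<longrightarrow>
   (\<exists>B1\<in>BS. \<exists>B2\<in>BS. fst (sL K U1 U2 B1 B2) mod 2 = 0 \<and> piq (sL K U1 U2 B1 B2) = (1, e))"
  by (induct K; code_simp)

lemma F2: "\<forall>U1\<in>UB. \<forall>U2\<in>UB. snd U1 mod 2 = snd U2 mod 2 \<longrightarrow>
   (\<exists>B1\<in>BS. \<exists>B2\<in>BS. red 1 (sL K U1 U2 B1 B2) = (0,0) \<and> fst (pi2q K (sL K U1 U2 B1 B2)) = 1)"
  by (induct K; code_simp)

lemma F3: "\<forall>U1\<in>UB. \<forall>U2\<in>UB. snd U1 mod 2 = snd U2 mod 2 \<longrightarrow>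
   (\<exists>B1\<in>BS. \<exists>B2\<in>BS. red 1 (sL K U1 U2 B1 B2) = (0,0) \<and> fst (pi2q K (sL K U1 U2 B1 B2)) = 0)"
  by (induct K; code_simp)

lemma F4: "K \<in> {Q2_sqrtm1, Q2_sqrtm5} \<Longrightarrow> \<forall>U1\<in>UB. \<forall>U2\<in>UB. \<forall>U3\<in>UB.
   snd U1 mod 2 = snd U2 mod 2 \<and> snd U1 mod 2 = snd U3 mod 2 \<longrightarrow>
   (\<exists>B1\<in>BS. \<exists>B2\<in>BS. sL K U1 U2 B1 B2 = (0,0)) \<or> (\<exists>B1\<in>BS. \<exists>B2\<in>BS. sL K U1 U3 B1 B2 = (0,0))
   \<or> (\<exists>B1\<in>BS. \<exists>B2\<in>BS. sL K U2 U3 B1 B2 = (0,0))"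
  by (induct K; code_simp)

lemma F5: "K \<in> {Q2_sqrt2, Q2_sqrt10, Q2_sqrtm2, Q2_sqrtm10} \<Longrightarrow> \<forall>U1\<in>UB. \<forall>U2\<in>UB. \<forall>U3\<in>UB.
   snd U1 mod 2 = snd U2 mod 2 \<and> snd U1 mod 2 = snd U3 mod 2 \<longrightarrow>
   (\<exists>B1\<in>BS. \<exists>B2\<in>BS. red 1 (sL K U1 U2 B1 B2) = (0,0) \<and> pi2q K (sL K U1 U2 B1 B2) = (1, snd U1 mod 2))
 \<or> (\<exists>B1\<in>BS. \<exists>B2\<in>BS. red 1 (sL K U1 U3 B1 B2) = (0,0) \<and> pi2q K (sL K U1 U3 B1 B2) = (1, snd U1 mod 2))
 \<or> (\<exists>B1\<in>BS. \<exists>B2\<in>BS. red 1 (sL K U2 U3 B1 B2) = (0,0) \<and> pi2q K (sL K U2 U3 B1 B2) = (1, snd U1 mod 2))"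
  by (induct K; code_simp)

lemma omul_one_l: "x \<in> ocarrier \<Longrightarrow> omul K (celt 1 0) x = x"
  using omul_one[of x K] by (simp add: omul_comm_at)

lemma opi_sq: "opi [^]\<^bsub>ORing K\<^esub> (2::nat) = omul K opi opi"
  by (simp add: numeral_2_eq_2 omul_one_l[OF opi_closed])

lemma sq_lvl1: "omul K (omul K opi opi) v 1 = (0,0)"
proof -
  have "omul K (omul K opi opi) v 1 = red 1 (mulZ K (mulZ K (0,1) (0,1)) (v 1))"
    by (simp add: omul_at opi_celt celt_at red_mulZ_l red_mulZ_r)
  also have "\<dots> = (0,0)"
  proof -
    obtain p where p: "nm K = 2*p" using nm_even[of K] by blast
    obtain q where q: "tr K = 2*q" using tr_even[of K] by blast
    obtain a b where ab: "v 1 = (a,b)" by (cases "v 1")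
    have "mulZ K (mulZ K (0,1) (0,1)) (v 1) = (2 * (- p * a - p * tr K * b), 2 * (- p * b + q * a + q * tr K * b))"
      unfolding ab mulZ_def using p q by (simp add: algebra_simps)
    then show ?thesis by (simp add: red_def)
  qed
  finally show ?thesis .
qed

lemma pcoeff_eq:
  assumes u: "u \<in> ocarrier" and u1: "fst (u 1) = 1"
  shows "pcoeff K u = nat (snd (u 1))"
proof -
  define s where "s = snd (u 1)"
  have "snd (u 1) mod 2 = snd (u 1)" using carrD1[OF u, of 1] by (simp add: red_def prod_eq_iff)
  then have "snd (u 1) \<in> {0..<2^1}" using mod_self_iff[of "snd (u 1)" 1] by simp
  then have s01: "s = 0 \<or> s = 1" unfolding s_def by auto
  have u1s: "u 1 = (1, s)" using u1 s_def by (simp add: prod_eq_iff)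
  have ite: "(if c = 0 then celt 0 0 else opi) = celt 0 (int c)" if "c \<in> {0,1}" for c :: nat
    using that by (auto simp: opi_celt)
  show ?thesis unfolding pcoeff_def ORing_simps opi_sq
  proof (rule the_equality)
    show "nat (snd (u 1)) \<in> {0, 1} \<and> (\<exists>v\<in>ocarrier. u = oadd (oadd (celt 1 0)
        (if nat (snd (u 1)) = 0 then celt 0 0 else opi)) (omul K (omul K opi opi) v))"
    proof
      show "nat (snd (u 1)) \<in> {0, 1}" using s01 s_def by auto
      define z where "z = oadd u (oneg (celt 1 s))"
      have zc: "z \<in> ocarrier" unfolding z_def by (intro oadd_closed oneg_closed celt_closed u)
      have "z 1 = red 1 (addZ (u 1) (-1, -s))"
        unfolding z_def oadd_at oneg_def celt_at by (simp add: red_neg red_addZ_r del: One_nat_def)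
      also have "\<dots> = (0,0)" using u1s by (simp add: red_def addZ_def)
      finally obtain v where v: "v \<in> ocarrier" "z = omul K (omul K opi opi) v"
        using div_pi2[OF zc, of K] by auto
      have "u = oadd (celt 1 s) z"
        unfolding z_def using oadd_oneg[of "celt 1 s"] oadd_zero[OF u]
        by (simp add: oadd_left_commute[of "celt 1 s"])
      moreover have "oadd (celt 1 0) (if nat (snd (u 1)) = 0 then celt 0 0 else opi) = celt 1 s"
        using s01 s_def by (auto simp: opi_celt oadd_celt)
      ultimately show "\<exists>v\<in>ocarrier. u = oadd (oadd (celt 1 0)
        (if nat (snd (u 1)) = 0 then celt 0 0 else opi)) (omul K (omul K opi opi) v)"
        using v by auto
    qed
  next
    fix c :: nat assume c: "c \<in> {0, 1} \<and> (\<exists>v\<in>ocarrier. u = oadd (oadd (celt 1 0)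
        (if c = 0 then celt 0 0 else opi)) (omul K (omul K opi opi) v))"
    then obtain v where v: "v \<in> ocarrier" "u = oadd (celt 1 (int c)) (omul K (omul K opi opi) v)"
      using ite[of c] by (auto simp: oadd_celt)
    have "u 1 = red 1 (addZ (red 1 (1, int c)) (0,0))"
      using v(2) sq_lvl1[of K v] by (simp add: oadd_at celt_at)
    also have "\<dots> = (1, int c)" using c by (auto simp: red_def addZ_def)
    finally show "c = nat (snd (u 1))" by simp
  qed
qed

lemma F_pow4: "\<forall>B\<in>UB. red 2 (mulZ K (mulZ K B B) (mulZ K B B)) = (1,0)"
  by (induct K; code_simp)

lemma pow_lvl2_one: "y 2 = (1,0) \<Longrightarrow> (y [^]\<^bsub>ORing K\<^esub> (k::nat)) 2 = (1,0)"
  by (induction k) (simp_all add: celt_at omul_at red_def mulZ_def)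

lemma unit_facts:
  assumes "u \<in> Units (ORing K)"
  shows "u \<in> ocarrier" "u 2 \<in> UB" "fst (u 1) = 1" "snd (u 1) = snd (u 2) mod 2"
    "pcoeff K u = nat (snd (u 2) mod 2)"
proof -
  have uc: "u \<in> ocarrier" "odd (fst (u 1))" using assms Units_iff by auto
  show "u \<in> ocarrier" using uc(1) .
  obtain c d where cd: "u 2 = (c,d)" "c \<in> {0,1,2,3}" "d \<in> {0,1,2,3}" using carr2[OF uc(1)] .
  have "odd c" using carr_odd[OF uc, of 2] cd by simp
  then show "u 2 \<in> UB" using cd unfolding UB_def by auto
  have l1: "u 1 = red 1 (c,d)" using lvl1[OF uc(1)] cd by simp
  show f1: "fst (u 1) = 1" using l1 \<open>odd c\<close> by (simp add: red_def) presburger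
  show s1: "snd (u 1) = snd (u 2) mod 2" using l1 cd by (simp add: red_def)
  show "pcoeff K u = nat (snd (u 2) mod 2)" using pcoeff_eq[OF uc(1) f1] s1 by simp
qed

lemma pow_d_lvl2:
  fixes m :: nat
  assumes b: "b \<in> Units (ORing K)" and m: "odd m"
  shows "(b [^]\<^bsub>ORing K\<^esub> (2*m)) 2 = red 2 (mulZ K (b 2) (b 2))"
proof -
  interpret cring "ORing K" by (rule cring_O)
  have bc: "b \<in> carrier (ORing K)" using b by auto
  obtain k :: nat where k: "m = 2*k + 1" using m oddE by blast
  have e: "2*m = 2 + 4*k" using k by simp
  have "b [^]\<^bsub>ORing K\<^esub> (2*m) = b [^]\<^bsub>ORing K\<^esub> (2::nat) \<otimes>\<^bsub>ORing K\<^esub> (b [^]\<^bsub>ORing K\<^esub> (4::nat)) [^]\<^bsub>ORing K\<^esub> k"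
    unfolding e using nat_pow_mult[OF bc, of 2 "4*k", symmetric] nat_pow_pow[OF bc, of 4 k, symmetric] by simp
  moreover have "(b [^]\<^bsub>ORing K\<^esub> (4::nat)) 2 = (1,0)"
  proof -
    have "(b [^]\<^bsub>ORing K\<^esub> (4::nat)) 2 = red 2 (mulZ K (mulZ K (mulZ K (mulZ K (1,0) (b 2)) (b 2)) (b 2)) (b 2))"
      by (simp add: eval_nat_numeral omul_at celt_at red_mulZ_l)
    also have "\<dots> = red 2 (mulZ K (mulZ K (b 2) (b 2)) (mulZ K (b 2) (b 2)))"
      by (simp add: mulZ_one mulZ_assoc)
    also have "\<dots> = (1,0)" using F_pow4[of K] unit_facts(2)[OF b] by blast
    finally show ?thesis .
  qed
  moreover have "(b [^]\<^bsub>ORing K\<^esub> (2::nat)) 2 = red 2 (mulZ K (b 2) (b 2))"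
    by (simp add: eval_nat_numeral omul_at celt_at red_mulZ_l mulZ_one)
  ultimately show ?thesis
    using pow_lvl2_one[of "b [^]\<^bsub>ORing K\<^esub> (4::nat)" K k]
    by (simp add: omul_at red_mulZ_l, simp add: mulZ_def red_red)
qed

lemma bs_unit: "B \<in> BS \<Longrightarrow> celt (fst B) (snd B) \<in> Units (ORing K) \<and> celt (fst B) (snd B) 2 = B"
  unfolding BS_def Units_iff by (auto simp: celt_closed celt_at red_def)

lemma bex2E: "\<exists>x\<in>A. \<exists>y\<in>B. P x y \<and> Q x y \<Longrightarrow> (\<And>x y. x \<in> A \<Longrightarrow> y \<in> B \<Longrightarrow> P x y \<Longrightarrow> Q x y \<Longrightarrow> thesis) \<Longrightarrow> thesis"
  by blast

lemma units_carr: "x \<in> Units (ORing K) \<Longrightarrow> x \<in> ocarrier" using Units_iff by auto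

lemma sfacts:
  fixes m :: nat
  assumes m: "odd m" and u1: "u1 \<in> Units (ORing K)" and u2: "u2 \<in> Units (ORing K)"
    and B1: "B1 \<in> BS" and B2: "B2 \<in> BS"
  obtains b1 b2 s where "b1 \<in> Units (ORing K)" "b2 \<in> Units (ORing K)" "s \<in> ocarrier"
     "s 2 = sL K (u1 2) (u2 2) B1 B2" "s 1 = red 1 (sL K (u1 2) (u2 2) B1 B2)"
     "\<And>r::nat. (opi [^]\<^bsub>ORing K\<^esub> r \<otimes>\<^bsub>ORing K\<^esub> u1) \<otimes>\<^bsub>ORing K\<^esub> b1 [^]\<^bsub>ORing K\<^esub> (2 * m)
        \<oplus>\<^bsub>ORing K\<^esub> (opi [^]\<^bsub>ORing K\<^esub> r \<otimes>\<^bsub>ORing K\<^esub> u2) \<otimes>\<^bsub>ORing K\<^esub> b2 [^]\<^bsub>ORing K\<^esub> (2 * m)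
      = omul K (opi [^]\<^bsub>ORing K\<^esub> r) s"
proof -
  interpret cring "ORing K" by (rule cring_O)
  define b1 where "b1 = celt (fst B1) (snd B1)"
  define b2 where "b2 = celt (fst B2) (snd B2)"
  have b1: "b1 \<in> Units (ORing K)" "b1 2 = B1" using bs_unit[OF B1] b1_def by auto
  have b2: "b2 \<in> Units (ORing K)" "b2 2 = B2" using bs_unit[OF B2] b2_def by auto
  define s where "s = oadd (omul K u1 (b1 [^]\<^bsub>ORing K\<^esub> (2*m))) (omul K u2 (b2 [^]\<^bsub>ORing K\<^esub> (2*m)))"
  have p1: "b1 [^]\<^bsub>ORing K\<^esub> (2*m) \<in> ocarrier" using nat_pow_closed[of b1 "2*m"] units_carr[OF b1(1)] by simp
  have p2: "b2 [^]\<^bsub>ORing K\<^esub> (2*m) \<in> ocarrier" using nat_pow_closed[of b2 "2*m"] units_carr[OF b2(1)] by simp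
  have sc: "s \<in> ocarrier" unfolding s_def
    using oadd_closed[OF omul_closed[OF units_carr[OF u1] p1] omul_closed[OF units_carr[OF u2] p2]] .
  have s2: "s 2 = sL K (u1 2) (u2 2) B1 B2"
    unfolding s_def
    by (simp add: oadd_at omul_at pow_d_lvl2[OF b1(1) m] pow_d_lvl2[OF b2(1) m] b1(2) b2(2)
        red_mulZ_r red_addZ_l red_addZ_r sL_def)
  have s1: "s 1 = red 1 (sL K (u1 2) (u2 2) B1 B2)" using lvl1[OF sc] s2 by simp
  have eq: "(opi [^]\<^bsub>ORing K\<^esub> r \<otimes>\<^bsub>ORing K\<^esub> u1) \<otimes>\<^bsub>ORing K\<^esub> b1 [^]\<^bsub>ORing K\<^esub> (2 * m)
        \<oplus>\<^bsub>ORing K\<^esub> (opi [^]\<^bsub>ORing K\<^esub> r \<otimes>\<^bsub>ORing K\<^esub> u2) \<otimes>\<^bsub>ORing K\<^esub> b2 [^]\<^bsub>ORing K\<^esub> (2 * m)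
      = omul K (opi [^]\<^bsub>ORing K\<^esub> r) s" for r :: nat
    unfolding s_def by (simp add: omul_distrib omul_assoc)
  show ?thesis by (rule that[OF b1(1) b2(1) sc s2 s1 eq])
qed

lemma opi_pow1: "opi [^]\<^bsub>ORing K\<^esub> (Suc 0) = opi"
  by (simp add: omul_one_l[OF opi_closed])

lemma pw1:
  fixes r :: nat
  shows "omul K (opi [^]\<^bsub>ORing K\<^esub> r) (omul K opi w) = opi [^]\<^bsub>ORing K\<^esub> (r + 1) \<otimes>\<^bsub>ORing K\<^esub> w"
  unfolding Suc_eq_plus1[symmetric] by (simp add: omul_assoc)
lemma pw2:
  fixes r :: nat
  shows "omul K (opi [^]\<^bsub>ORing K\<^esub> r) (omul K (omul K opi opi) w) = opi [^]\<^bsub>ORing K\<^esub> (r + 2) \<otimes>\<^bsub>ORing K\<^esub> w"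
  by (simp add: omul_assoc eval_nat_numeral)
lemma pw3:
  fixes r :: nat
  shows "omul K (opi [^]\<^bsub>ORing K\<^esub> r) (omul K (omul K opi opi) (omul K opi z)) = omul K (opi [^]\<^bsub>ORing K\<^esub> (r + 3)) z"
  by (simp add: omul_assoc eval_nat_numeral)
lemma pw4:
  fixes r :: nat
  shows "omul K (opi [^]\<^bsub>ORing K\<^esub> r) (omul K (omul K opi opi) (omul K (omul K opi opi) z)) = omul K (opi [^]\<^bsub>ORing K\<^esub> (r + 4)) z"
  by (simp add: omul_assoc eval_nat_numeral)

lemma par_eq: "u1 \<in> Units (ORing K) \<Longrightarrow> u2 \<in> Units (ORing K) \<Longrightarrow>
   pcoeff K u1 = pcoeff K u2 \<longleftrightarrow> snd (u1 2) mod 2 = snd (u2 2) mod 2"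
  using unit_facts(5)[of u1 K] unit_facts(5)[of u2 K] by (simp add: nat_eq_iff2)

lemma part1_core:
  fixes m r e :: nat
  assumes m: "odd m" and u1: "u1 \<in> Units (ORing K)" and u2: "u2 \<in> Units (ORing K)"
    and pc: "pcoeff K u1 \<noteq> pcoeff K u2" and e: "e \<in> {0,1}"
  shows "\<exists>b1\<in>Units (ORing K). \<exists>b2\<in>Units (ORing K). \<exists>w\<in>Units (ORing K). pcoeff K w = e \<and>
     (opi [^]\<^bsub>ORing K\<^esub> r \<otimes>\<^bsub>ORing K\<^esub> u1) \<otimes>\<^bsub>ORing K\<^esub> b1 [^]\<^bsub>ORing K\<^esub> (2 * m)
        \<oplus>\<^bsub>ORing K\<^esub> (opi [^]\<^bsub>ORing K\<^esub> r \<otimes>\<^bsub>ORing K\<^esub> u2) \<otimes>\<^bsub>ORing K\<^esub> b2 [^]\<^bsub>ORing K\<^esub> (2 * m)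
      = opi [^]\<^bsub>ORing K\<^esub> (r + 1) \<otimes>\<^bsub>ORing K\<^esub> w"
proof -
  have par: "snd (u1 2) mod 2 \<noteq> snd (u2 2) mod 2" using par_eq[OF u1 u2] pc by simp
  have ie: "int e \<in> {0,1}" using e by auto
  have ex: "\<exists>B1\<in>BS. \<exists>B2\<in>BS. (fst (sL K (u1 2) (u2 2) B1 B2) mod 2 = 0) \<and> (piq (sL K (u1 2) (u2 2) B1 B2) = (1, int e))"
    by (rule F1[of K, rule_format, OF unit_facts(2)[OF u1] unit_facts(2)[OF u2] ie par])
  obtain B1 B2 where B: "B1 \<in> BS" "B2 \<in> BS" and
    P: "fst (sL K (u1 2) (u2 2) B1 B2) mod 2 = 0" "piq (sL K (u1 2) (u2 2) B1 B2) = (1, int e)"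
    by (rule bex2E[OF ex])
  obtain b1 b2 s where b: "b1 \<in> Units (ORing K)" "b2 \<in> Units (ORing K)" and sc: "s \<in> ocarrier"
    and s2: "s 2 = sL K (u1 2) (u2 2) B1 B2" and s1: "s 1 = red 1 (sL K (u1 2) (u2 2) B1 B2)"
    and eq: "\<And>r::nat. (opi [^]\<^bsub>ORing K\<^esub> r \<otimes>\<^bsub>ORing K\<^esub> u1) \<otimes>\<^bsub>ORing K\<^esub> b1 [^]\<^bsub>ORing K\<^esub> (2 * m)
        \<oplus>\<^bsub>ORing K\<^esub> (opi [^]\<^bsub>ORing K\<^esub> r \<otimes>\<^bsub>ORing K\<^esub> u2) \<otimes>\<^bsub>ORing K\<^esub> b2 [^]\<^bsub>ORing K\<^esub> (2 * m)
      = omul K (opi [^]\<^bsub>ORing K\<^esub> r) s"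
    by (rule sfacts[OF m u1 u2 B], rule that)
  have "fst (s 1) = 0" using s1 P(1) by (simp add: red_def)
  then obtain w where w: "w \<in> ocarrier" "s = omul K opi w" using div_pi[OF sc, of K] by blast
  have w1: "w 1 = (1, int e)" using quot_pi[OF w] s2 P(2) by simp
  have "fst (w 1) = 1" using w1 by simp
  then have wu: "w \<in> Units (ORing K)" by (intro Units_iff[THEN iffD2] conjI w(1)) simp
  have pcw: "pcoeff K w = e" using pcoeff_eq[OF w(1)] w1 by simp
  have EQ: "(opi [^]\<^bsub>ORing K\<^esub> r \<otimes>\<^bsub>ORing K\<^esub> u1) \<otimes>\<^bsub>ORing K\<^esub> b1 [^]\<^bsub>ORing K\<^esub> (2 * m)
        \<oplus>\<^bsub>ORing K\<^esub> (opi [^]\<^bsub>ORing K\<^esub> r \<otimes>\<^bsub>ORing K\<^esub> u2) \<otimes>\<^bsub>ORing K\<^esub> b2 [^]\<^bsub>ORing K\<^esub> (2 * m)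
      = opi [^]\<^bsub>ORing K\<^esub> (r + 1) \<otimes>\<^bsub>ORing K\<^esub> w"
    unfolding eq[of r] w(2) by (rule pw1)
  show ?thesis
    apply (rule bexI[OF _ b(1)], rule bexI[OF _ b(2)], rule bexI[OF _ wu])
    using pcw EQ by (rule conjI)
qed

lemma part2_core:
  fixes m r :: nat
  assumes m: "odd m" and u1: "u1 \<in> Units (ORing K)" and u2: "u2 \<in> Units (ORing K)"
    and pc: "pcoeff K u1 = pcoeff K u2"
  shows "\<exists>b1\<in>Units (ORing K). \<exists>b2\<in>Units (ORing K).
     pord K ((opi [^]\<^bsub>ORing K\<^esub> r \<otimes>\<^bsub>ORing K\<^esub> u1) \<otimes>\<^bsub>ORing K\<^esub> b1 [^]\<^bsub>ORing K\<^esub> (2 * m)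
        \<oplus>\<^bsub>ORing K\<^esub> (opi [^]\<^bsub>ORing K\<^esub> r \<otimes>\<^bsub>ORing K\<^esub> u2) \<otimes>\<^bsub>ORing K\<^esub> b2 [^]\<^bsub>ORing K\<^esub> (2 * m))
      = enat (r + 2)"
proof -
  have par: "snd (u1 2) mod 2 = snd (u2 2) mod 2" using par_eq[OF u1 u2] pc by simp
  have ex: "\<exists>B1\<in>BS. \<exists>B2\<in>BS. (red 1 (sL K (u1 2) (u2 2) B1 B2) = (0,0)) \<and> (fst (pi2q K (sL K (u1 2) (u2 2) B1 B2)) = 1)"
    by (rule F2[of K, rule_format, OF unit_facts(2)[OF u1] unit_facts(2)[OF u2] par])
  obtain B1 B2 where B: "B1 \<in> BS" "B2 \<in> BS" and
    P: "red 1 (sL K (u1 2) (u2 2) B1 B2) = (0,0)" "fst (pi2q K (sL K (u1 2) (u2 2) B1 B2)) = 1"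
    by (rule bex2E[OF ex])
  obtain b1 b2 s where b: "b1 \<in> Units (ORing K)" "b2 \<in> Units (ORing K)" and sc: "s \<in> ocarrier"
    and s2: "s 2 = sL K (u1 2) (u2 2) B1 B2" and s1: "s 1 = red 1 (sL K (u1 2) (u2 2) B1 B2)"
    and eq: "\<And>r::nat. (opi [^]\<^bsub>ORing K\<^esub> r \<otimes>\<^bsub>ORing K\<^esub> u1) \<otimes>\<^bsub>ORing K\<^esub> b1 [^]\<^bsub>ORing K\<^esub> (2 * m)
        \<oplus>\<^bsub>ORing K\<^esub> (opi [^]\<^bsub>ORing K\<^esub> r \<otimes>\<^bsub>ORing K\<^esub> u2) \<otimes>\<^bsub>ORing K\<^esub> b2 [^]\<^bsub>ORing K\<^esub> (2 * m)
      = omul K (opi [^]\<^bsub>ORing K\<^esub> r) s"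
    by (rule sfacts[OF m u1 u2 B], rule that)
  obtain w where w: "w \<in> ocarrier" "s = omul K (omul K opi opi) w" using div_pi2[OF sc, of K] s1 P(1) by auto
  have "fst (w 1) = 1" using quot_pi2[OF w] s2 P(2) by simp
  then have wu: "w \<in> Units (ORing K)" by (intro Units_iff[THEN iffD2] conjI w(1)) simp
  have G: "pord K (omul K (opi [^]\<^bsub>ORing K\<^esub> (r+2)) w) = enat (r+2)" by (rule pord_eq[OF wu])
  have E: "(opi [^]\<^bsub>ORing K\<^esub> r \<otimes>\<^bsub>ORing K\<^esub> u1) \<otimes>\<^bsub>ORing K\<^esub> b1 [^]\<^bsub>ORing K\<^esub> (2 * m)
        \<oplus>\<^bsub>ORing K\<^esub> (opi [^]\<^bsub>ORing K\<^esub> r \<otimes>\<^bsub>ORing K\<^esub> u2) \<otimes>\<^bsub>ORing K\<^esub> b2 [^]\<^bsub>ORing K\<^esub> (2 * m)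
      = omul K (opi [^]\<^bsub>ORing K\<^esub> (r + 2)) w"
    unfolding eq[of r] w(2) pw2 by (simp only: ORing_simps)
  show ?thesis
    apply (rule bexI[OF _ b(1)], rule bexI[OF _ b(2)])
    using G unfolding E[symmetric] .
qed

lemma part3_core:
  fixes m r :: nat
  assumes m: "odd m" and u1: "u1 \<in> Units (ORing K)" and u2: "u2 \<in> Units (ORing K)"
    and pc: "pcoeff K u1 = pcoeff K u2"
  shows "\<exists>b1\<in>Units (ORing K). \<exists>b2\<in>Units (ORing K).
     pord K ((opi [^]\<^bsub>ORing K\<^esub> r \<otimes>\<^bsub>ORing K\<^esub> u1) \<otimes>\<^bsub>ORing K\<^esub> b1 [^]\<^bsub>ORing K\<^esub> (2 * m)
        \<oplus>\<^bsub>ORing K\<^esub> (opi [^]\<^bsub>ORing K\<^esub> r \<otimes>\<^bsub>ORing K\<^esub> u2) \<otimes>\<^bsub>ORing K\<^esub> b2 [^]\<^bsub>ORing K\<^esub> (2 * m))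
      \<ge> enat (r + 3)"
proof -
  have par: "snd (u1 2) mod 2 = snd (u2 2) mod 2" using par_eq[OF u1 u2] pc by simp
  have ex: "\<exists>B1\<in>BS. \<exists>B2\<in>BS. (red 1 (sL K (u1 2) (u2 2) B1 B2) = (0,0)) \<and> (fst (pi2q K (sL K (u1 2) (u2 2) B1 B2)) = 0)"
    by (rule F3[of K, rule_format, OF unit_facts(2)[OF u1] unit_facts(2)[OF u2] par])
  obtain B1 B2 where B: "B1 \<in> BS" "B2 \<in> BS" and
    P: "red 1 (sL K (u1 2) (u2 2) B1 B2) = (0,0)" "fst (pi2q K (sL K (u1 2) (u2 2) B1 B2)) = 0"
    by (rule bex2E[OF ex])
  obtain b1 b2 s where b: "b1 \<in> Units (ORing K)" "b2 \<in> Units (ORing K)" and sc: "s \<in> ocarrier"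
    and s2: "s 2 = sL K (u1 2) (u2 2) B1 B2" and s1: "s 1 = red 1 (sL K (u1 2) (u2 2) B1 B2)"
    and eq: "\<And>r::nat. (opi [^]\<^bsub>ORing K\<^esub> r \<otimes>\<^bsub>ORing K\<^esub> u1) \<otimes>\<^bsub>ORing K\<^esub> b1 [^]\<^bsub>ORing K\<^esub> (2 * m)
        \<oplus>\<^bsub>ORing K\<^esub> (opi [^]\<^bsub>ORing K\<^esub> r \<otimes>\<^bsub>ORing K\<^esub> u2) \<otimes>\<^bsub>ORing K\<^esub> b2 [^]\<^bsub>ORing K\<^esub> (2 * m)
      = omul K (opi [^]\<^bsub>ORing K\<^esub> r) s"
    by (rule sfacts[OF m u1 u2 B], rule that)
  obtain w where w: "w \<in> ocarrier" "s = omul K (omul K opi opi) w" using div_pi2[OF sc, of K] s1 P(1) by auto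
  have "fst (w 1) = 0" using quot_pi2[OF w] s2 P(2) by simp
  then obtain z where z: "z \<in> ocarrier" "w = omul K opi z" using div_pi[OF w(1), of K] by blast
  have G: "enat (r+3) \<le> pord K (omul K (opi [^]\<^bsub>ORing K\<^esub> (r+3)) z)" by (rule pord_ge[OF z(1)])
  have E: "(opi [^]\<^bsub>ORing K\<^esub> r \<otimes>\<^bsub>ORing K\<^esub> u1) \<otimes>\<^bsub>ORing K\<^esub> b1 [^]\<^bsub>ORing K\<^esub> (2 * m)
        \<oplus>\<^bsub>ORing K\<^esub> (opi [^]\<^bsub>ORing K\<^esub> r \<otimes>\<^bsub>ORing K\<^esub> u2) \<otimes>\<^bsub>ORing K\<^esub> b2 [^]\<^bsub>ORing K\<^esub> (2 * m)
      = omul K (opi [^]\<^bsub>ORing K\<^esub> (r + 3)) z"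
    unfolding eq[of r] w(2) z(2) by (rule pw3)
  show ?thesis
    apply (rule bexI[OF _ b(1)], rule bexI[OF _ b(2)])
    using G unfolding E[symmetric] .
qed

lemma pair4:
  fixes m r :: nat
  assumes m: "odd m" and u1: "u1 \<in> Units (ORing K)" and u2: "u2 \<in> Units (ORing K)"
    and B: "B1 \<in> BS" "B2 \<in> BS" and P: "sL K (u1 2) (u2 2) B1 B2 = (0,0)"
  shows "\<exists>b1\<in>Units (ORing K). \<exists>b2\<in>Units (ORing K).
     pord K ((opi [^]\<^bsub>ORing K\<^esub> r \<otimes>\<^bsub>ORing K\<^esub> u1) \<otimes>\<^bsub>ORing K\<^esub> b1 [^]\<^bsub>ORing K\<^esub> (2 * m)
        \<oplus>\<^bsub>ORing K\<^esub> (opi [^]\<^bsub>ORing K\<^esub> r \<otimes>\<^bsub>ORing K\<^esub> u2) \<otimes>\<^bsub>ORing K\<^esub> b2 [^]\<^bsub>ORing K\<^esub> (2 * m))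
      \<ge> enat (r + 4)"
proof -
  obtain b1 b2 s where b: "b1 \<in> Units (ORing K)" "b2 \<in> Units (ORing K)" and sc: "s \<in> ocarrier"
    and s2: "s 2 = sL K (u1 2) (u2 2) B1 B2" and s1: "s 1 = red 1 (sL K (u1 2) (u2 2) B1 B2)"
    and eq: "\<And>r::nat. (opi [^]\<^bsub>ORing K\<^esub> r \<otimes>\<^bsub>ORing K\<^esub> u1) \<otimes>\<^bsub>ORing K\<^esub> b1 [^]\<^bsub>ORing K\<^esub> (2 * m)
        \<oplus>\<^bsub>ORing K\<^esub> (opi [^]\<^bsub>ORing K\<^esub> r \<otimes>\<^bsub>ORing K\<^esub> u2) \<otimes>\<^bsub>ORing K\<^esub> b2 [^]\<^bsub>ORing K\<^esub> (2 * m)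
      = omul K (opi [^]\<^bsub>ORing K\<^esub> r) s"
    by (rule sfacts[OF m u1 u2 B], rule that)
  obtain w where w: "w \<in> ocarrier" "s = omul K (omul K opi opi) w"
    using div_pi2[OF sc, of K] s1 P by (auto simp: red_def)
  have "w 1 = (0,0)" using quot_pi2[OF w] s2 P by (simp add: pi2q_def)
  then obtain z where z: "z \<in> ocarrier" "w = omul K (omul K opi opi) z" using div_pi2[OF w(1), of K] by blast
  have G: "enat (r+4) \<le> pord K (omul K (opi [^]\<^bsub>ORing K\<^esub> (r+4)) z)" by (rule pord_ge[OF z(1)])
  have E: "(opi [^]\<^bsub>ORing K\<^esub> r \<otimes>\<^bsub>ORing K\<^esub> u1) \<otimes>\<^bsub>ORing K\<^esub> b1 [^]\<^bsub>ORing K\<^esub> (2 * m)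
        \<oplus>\<^bsub>ORing K\<^esub> (opi [^]\<^bsub>ORing K\<^esub> r \<otimes>\<^bsub>ORing K\<^esub> u2) \<otimes>\<^bsub>ORing K\<^esub> b2 [^]\<^bsub>ORing K\<^esub> (2 * m)
      = omul K (opi [^]\<^bsub>ORing K\<^esub> (r + 4)) z"
    unfolding eq[of r] w(2) z(2) by (rule pw4)
  show ?thesis
    apply (rule bexI[OF _ b(1)], rule bexI[OF _ b(2)])
    using G unfolding E[symmetric] .
qed

lemma pair5:
  fixes m r c :: nat
  assumes m: "odd m" and u1: "u1 \<in> Units (ORing K)" and u2: "u2 \<in> Units (ORing K)"
    and B: "B1 \<in> BS" "B2 \<in> BS" and P: "red 1 (sL K (u1 2) (u2 2) B1 B2) = (0,0)"
      "pi2q K (sL K (u1 2) (u2 2) B1 B2) = (1, int c)"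
  shows "\<exists>b1\<in>Units (ORing K). \<exists>b2\<in>Units (ORing K). \<exists>w\<in>Units (ORing K). pcoeff K w = c \<and>
     (opi [^]\<^bsub>ORing K\<^esub> r \<otimes>\<^bsub>ORing K\<^esub> u1) \<otimes>\<^bsub>ORing K\<^esub> b1 [^]\<^bsub>ORing K\<^esub> (2 * m)
        \<oplus>\<^bsub>ORing K\<^esub> (opi [^]\<^bsub>ORing K\<^esub> r \<otimes>\<^bsub>ORing K\<^esub> u2) \<otimes>\<^bsub>ORing K\<^esub> b2 [^]\<^bsub>ORing K\<^esub> (2 * m)
      = opi [^]\<^bsub>ORing K\<^esub> (r + 2) \<otimes>\<^bsub>ORing K\<^esub> w"
proof -
  obtain b1 b2 s where b: "b1 \<in> Units (ORing K)" "b2 \<in> Units (ORing K)" and sc: "s \<in> ocarrier"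
    and s2: "s 2 = sL K (u1 2) (u2 2) B1 B2" and s1: "s 1 = red 1 (sL K (u1 2) (u2 2) B1 B2)"
    and eq: "\<And>r::nat. (opi [^]\<^bsub>ORing K\<^esub> r \<otimes>\<^bsub>ORing K\<^esub> u1) \<otimes>\<^bsub>ORing K\<^esub> b1 [^]\<^bsub>ORing K\<^esub> (2 * m)
        \<oplus>\<^bsub>ORing K\<^esub> (opi [^]\<^bsub>ORing K\<^esub> r \<otimes>\<^bsub>ORing K\<^esub> u2) \<otimes>\<^bsub>ORing K\<^esub> b2 [^]\<^bsub>ORing K\<^esub> (2 * m)
      = omul K (opi [^]\<^bsub>ORing K\<^esub> r) s"
    by (rule sfacts[OF m u1 u2 B], rule that)
  obtain w where w: "w \<in> ocarrier" "s = omul K (omul K opi opi) w" using div_pi2[OF sc, of K] s1 P(1) by auto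
  have w1: "w 1 = (1, int c)" using quot_pi2[OF w] s2 P(2) by simp
  then have wu: "w \<in> Units (ORing K)" by (intro Units_iff[THEN iffD2] conjI w(1)) simp
  have pcw: "pcoeff K w = c" using pcoeff_eq[OF w(1)] w1 by simp
  have EQ: "(opi [^]\<^bsub>ORing K\<^esub> r \<otimes>\<^bsub>ORing K\<^esub> u1) \<otimes>\<^bsub>ORing K\<^esub> b1 [^]\<^bsub>ORing K\<^esub> (2 * m)
        \<oplus>\<^bsub>ORing K\<^esub> (opi [^]\<^bsub>ORing K\<^esub> r \<otimes>\<^bsub>ORing K\<^esub> u2) \<otimes>\<^bsub>ORing K\<^esub> b2 [^]\<^bsub>ORing K\<^esub> (2 * m)
      = opi [^]\<^bsub>ORing K\<^esub> (r + 2) \<otimes>\<^bsub>ORing K\<^esub> w"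
    unfolding eq[of r] w(2) by (rule pw2)
  show ?thesis
    apply (rule bexI[OF _ b(1)], rule bexI[OF _ b(2)], rule bexI[OF _ wu])
    using pcw EQ by (rule conjI)
qed

lemma bex2E': "\<exists>x\<in>A. \<exists>y\<in>B. P x y \<Longrightarrow> (\<And>x y. x \<in> A \<Longrightarrow> y \<in> B \<Longrightarrow> P x y \<Longrightarrow> thesis) \<Longrightarrow> thesis"
  by blast

lemma pick: "i \<in> {1,2,3} \<Longrightarrow> j \<in> {1,2,3} \<Longrightarrow> i \<noteq> j \<Longrightarrow> P i j \<Longrightarrow> \<exists>i\<in>{1,2,3::nat}. \<exists>j\<in>{1,2,3::nat}. i \<noteq> j \<and> P i j"
  by blast

lemma part1:
  fixes K :: qfield and m r :: nat
  assumes m: "odd m"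
  shows "(\<forall>a1 a2 u1 u2. u1 \<in> Units (ORing K) \<and> u2 \<in> Units (ORing K)
       \<and> a1 = opi [^]\<^bsub>ORing K\<^esub> r \<otimes>\<^bsub>ORing K\<^esub> u1 \<and> a2 = opi [^]\<^bsub>ORing K\<^esub> r \<otimes>\<^bsub>ORing K\<^esub> u2
       \<and> pcoeff K u1 \<noteq> pcoeff K u2 \<longrightarrow>
       (\<forall>e\<in>{0,1}. \<exists>b1\<in>Units (ORing K). \<exists>b2\<in>Units (ORing K). \<exists>w\<in>Units (ORing K). pcoeff K w = e \<and>
          a1 \<otimes>\<^bsub>ORing K\<^esub> b1 [^]\<^bsub>ORing K\<^esub> (2 * m) \<oplus>\<^bsub>ORing K\<^esub> a2 \<otimes>\<^bsub>ORing K\<^esub> b2 [^]\<^bsub>ORing K\<^esub> (2 * m)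
            = opi [^]\<^bsub>ORing K\<^esub> (r + 1) \<otimes>\<^bsub>ORing K\<^esub> w))"
  by (intro allI impI ballI, elim conjE, hypsubst, rule part1_core[OF m], assumption+)

lemma part2:
  fixes K :: qfield and m r :: nat
  assumes m: "odd m"
  shows "(\<forall>a1 a2 u1 u2. u1 \<in> Units (ORing K) \<and> u2 \<in> Units (ORing K)
       \<and> a1 = opi [^]\<^bsub>ORing K\<^esub> r \<otimes>\<^bsub>ORing K\<^esub> u1 \<and> a2 = opi [^]\<^bsub>ORing K\<^esub> r \<otimes>\<^bsub>ORing K\<^esub> u2
       \<and> pcoeff K u1 = pcoeff K u2 \<longrightarrow>
       (\<exists>b1\<in>Units (ORing K). \<exists>b2\<in>Units (ORing K).
          pord K (a1 \<otimes>\<^bsub>ORing K\<^esub> b1 [^]\<^bsub>ORing K\<^esub> (2 * m) \<oplus>\<^bsub>ORing K\<^esub> a2 \<otimes>\<^bsub>ORing K\<^esub> b2 [^]\<^bsub>ORing K\<^esub> (2 * m))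
            = enat (r + 2)))"
  by (intro allI impI ballI, elim conjE, hypsubst, rule part2_core[OF m], assumption+)

lemma part3:
  fixes K :: qfield and m r :: nat
  assumes m: "odd m"
  shows "(\<forall>a1 a2 u1 u2. u1 \<in> Units (ORing K) \<and> u2 \<in> Units (ORing K)
       \<and> a1 = opi [^]\<^bsub>ORing K\<^esub> r \<otimes>\<^bsub>ORing K\<^esub> u1 \<and> a2 = opi [^]\<^bsub>ORing K\<^esub> r \<otimes>\<^bsub>ORing K\<^esub> u2
       \<and> pcoeff K u1 = pcoeff K u2 \<longrightarrow>
       (\<exists>b1\<in>Units (ORing K). \<exists>b2\<in>Units (ORing K).
          pord K (a1 \<otimes>\<^bsub>ORing K\<^esub> b1 [^]\<^bsub>ORing K\<^esub> (2 * m) \<oplus>\<^bsub>ORing K\<^esub> a2 \<otimes>\<^bsub>ORing K\<^esub> b2 [^]\<^bsub>ORing K\<^esub> (2 * m))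
            \<ge> enat (r + 3)))"
  by (intro allI impI ballI, elim conjE, hypsubst, rule part3_core[OF m], assumption+)

lemma part4:
  fixes K :: qfield and m r :: nat
  assumes m: "odd m"
  shows "(K \<in> {Q2_sqrtm1, Q2_sqrtm5} \<longrightarrow>
       (\<forall>a u :: nat \<Rightarrow> oelt. (\<forall>i\<in>{1,2,3}. u i \<in> Units (ORing K)
            \<and> a i = opi [^]\<^bsub>ORing K\<^esub> r \<otimes>\<^bsub>ORing K\<^esub> u i \<and> pcoeff K (u i) = pcoeff K (u 1)) \<longrightarrow>
         (\<exists>i\<in>{1,2,3}. \<exists>j\<in>{1,2,3::nat}. i \<noteq> j \<and> (\<exists>bi\<in>Units (ORing K). \<exists>bj\<in>Units (ORing K).
            pord K (a i \<otimes>\<^bsub>ORing K\<^esub> bi [^]\<^bsub>ORing K\<^esub> (2 * m) \<oplus>\<^bsub>ORing K\<^esub> a j \<otimes>\<^bsub>ORing K\<^esub> bj [^]\<^bsub>ORing K\<^esub> (2 * m))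
              \<ge> enat (r + 4)))))"
proof (intro impI allI)
  fix a u :: "nat \<Rightarrow> oelt"
  assume K: "K \<in> {Q2_sqrtm1, Q2_sqrtm5}"
  assume H: "\<forall>i\<in>{1,2,3}. u i \<in> Units (ORing K)
            \<and> a i = opi [^]\<^bsub>ORing K\<^esub> r \<otimes>\<^bsub>ORing K\<^esub> u i \<and> pcoeff K (u i) = pcoeff K (u 1)"
  have u: "u 1 \<in> Units (ORing K)" "u 2 \<in> Units (ORing K)" "u 3 \<in> Units (ORing K)" using H by auto
  have a: "a 1 = opi [^]\<^bsub>ORing K\<^esub> r \<otimes>\<^bsub>ORing K\<^esub> u 1" "a 2 = opi [^]\<^bsub>ORing K\<^esub> r \<otimes>\<^bsub>ORing K\<^esub> u 2"
     "a 3 = opi [^]\<^bsub>ORing K\<^esub> r \<otimes>\<^bsub>ORing K\<^esub> u 3" using H by auto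
  have pc: "pcoeff K (u 2) = pcoeff K (u 1)" "pcoeff K (u 3) = pcoeff K (u 1)" using H by auto
  have p12: "snd (u 1 2) mod 2 = snd (u 2 2) mod 2" using par_eq[OF u(1) u(2)] pc(1) by simp
  have p13: "snd (u 1 2) mod 2 = snd (u 3 2) mod 2" using par_eq[OF u(1) u(3)] pc(2) by simp
  have D: "(\<exists>B1\<in>BS. \<exists>B2\<in>BS. sL K (u 1 2) (u 2 2) B1 B2 = (0,0)) \<or> (\<exists>B1\<in>BS. \<exists>B2\<in>BS. sL K (u 1 2) (u 3 2) B1 B2 = (0,0))
   \<or> (\<exists>B1\<in>BS. \<exists>B2\<in>BS. sL K (u 2 2) (u 3 2) B1 B2 = (0,0))"
    by (rule F4[OF K, rule_format, OF unit_facts(2)[OF u(1)] unit_facts(2)[OF u(2)] unit_facts(2)[OF u(3)] conjI[OF p12 p13]])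
  show "\<exists>i\<in>{1,2,3}. \<exists>j\<in>{1,2,3::nat}. i \<noteq> j \<and> (\<exists>bi\<in>Units (ORing K). \<exists>bj\<in>Units (ORing K).
            pord K (a i \<otimes>\<^bsub>ORing K\<^esub> bi [^]\<^bsub>ORing K\<^esub> (2 * m) \<oplus>\<^bsub>ORing K\<^esub> a j \<otimes>\<^bsub>ORing K\<^esub> bj [^]\<^bsub>ORing K\<^esub> (2 * m))
              \<ge> enat (r + 4))"
    using D
  proof (elim disjE)
    assume "\<exists>B1\<in>BS. \<exists>B2\<in>BS. sL K (u 1 2) (u 2 2) B1 B2 = (0,0)"
    then obtain B1 B2 where B: "B1 \<in> BS" "B2 \<in> BS" and P: "sL K (u 1 2) (u 2 2) B1 B2 = (0,0)" by (rule bex2E')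
    show ?thesis
      by (rule pick[of 1 2], simp, simp, simp, unfold a, rule pair4[OF m u(1) u(2) B P])
  next
    assume "\<exists>B1\<in>BS. \<exists>B2\<in>BS. sL K (u 1 2) (u 3 2) B1 B2 = (0,0)"
    then obtain B1 B2 where B: "B1 \<in> BS" "B2 \<in> BS" and P: "sL K (u 1 2) (u 3 2) B1 B2 = (0,0)" by (rule bex2E')
    show ?thesis
      by (rule pick[of 1 3], simp, simp, simp, unfold a, rule pair4[OF m u(1) u(3) B P])
  next
    assume "\<exists>B1\<in>BS. \<exists>B2\<in>BS. sL K (u 2 2) (u 3 2) B1 B2 = (0,0)"
    then obtain B1 B2 where B: "B1 \<in> BS" "B2 \<in> BS" and P: "sL K (u 2 2) (u 3 2) B1 B2 = (0,0)" by (rule bex2E')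
    show ?thesis
      by (rule pick[of 2 3], simp, simp, simp, unfold a, rule pair4[OF m u(2) u(3) B P])
  qed
qed

lemma part5:
  fixes K :: qfield and m r :: nat
  assumes m: "odd m"
  shows "(K \<in> {Q2_sqrt2, Q2_sqrt10, Q2_sqrtm2, Q2_sqrtm10} \<longrightarrow>
       (\<forall>(a :: nat \<Rightarrow> oelt) u c. (\<forall>i\<in>{1,2,3}. u i \<in> Units (ORing K)
            \<and> a i = opi [^]\<^bsub>ORing K\<^esub> r \<otimes>\<^bsub>ORing K\<^esub> u i \<and> pcoeff K (u i) = c) \<longrightarrow>
         (\<exists>i\<in>{1,2,3}. \<exists>j\<in>{1,2,3::nat}. i \<noteq> j \<and> (\<exists>bi\<in>Units (ORing K). \<exists>bj\<in>Units (ORing K).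
            \<exists>w\<in>Units (ORing K). pcoeff K w = c \<and>
            a i \<otimes>\<^bsub>ORing K\<^esub> bi [^]\<^bsub>ORing K\<^esub> (2 * m) \<oplus>\<^bsub>ORing K\<^esub> a j \<otimes>\<^bsub>ORing K\<^esub> bj [^]\<^bsub>ORing K\<^esub> (2 * m)
              = opi [^]\<^bsub>ORing K\<^esub> (r + 2) \<otimes>\<^bsub>ORing K\<^esub> w))))"
proof (intro impI allI)
  fix a u :: "nat \<Rightarrow> oelt" and c :: nat
  assume K: "K \<in> {Q2_sqrt2, Q2_sqrt10, Q2_sqrtm2, Q2_sqrtm10}"
  assume H: "\<forall>i\<in>{1,2,3}. u i \<in> Units (ORing K)
            \<and> a i = opi [^]\<^bsub>ORing K\<^esub> r \<otimes>\<^bsub>ORing K\<^esub> u i \<and> pcoeff K (u i) = c"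
  have u: "u 1 \<in> Units (ORing K)" "u 2 \<in> Units (ORing K)" "u 3 \<in> Units (ORing K)" using H by auto
  have a: "a 1 = opi [^]\<^bsub>ORing K\<^esub> r \<otimes>\<^bsub>ORing K\<^esub> u 1" "a 2 = opi [^]\<^bsub>ORing K\<^esub> r \<otimes>\<^bsub>ORing K\<^esub> u 2"
     "a 3 = opi [^]\<^bsub>ORing K\<^esub> r \<otimes>\<^bsub>ORing K\<^esub> u 3" using H by auto
  have pc: "pcoeff K (u 1) = c" "pcoeff K (u 2) = c" "pcoeff K (u 3) = c" using H by auto
  have p12: "snd (u 1 2) mod 2 = snd (u 2 2) mod 2" using par_eq[OF u(1) u(2)] pc by simp
  have p13: "snd (u 1 2) mod 2 = snd (u 3 2) mod 2" using par_eq[OF u(1) u(3)] pc by simp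
  have ci: "snd (u 1 2) mod 2 = int c" using unit_facts(5)[OF u(1)] pc(1) by simp
  have D: "(\<exists>B1\<in>BS. \<exists>B2\<in>BS. red 1 (sL K (u 1 2) (u 2 2) B1 B2) = (0,0) \<and> pi2q K (sL K (u 1 2) (u 2 2) B1 B2) = (1, snd (u 1 2) mod 2))
 \<or> (\<exists>B1\<in>BS. \<exists>B2\<in>BS. red 1 (sL K (u 1 2) (u 3 2) B1 B2) = (0,0) \<and> pi2q K (sL K (u 1 2) (u 3 2) B1 B2) = (1, snd (u 1 2) mod 2))
 \<or> (\<exists>B1\<in>BS. \<exists>B2\<in>BS. red 1 (sL K (u 2 2) (u 3 2) B1 B2) = (0,0) \<and> pi2q K (sL K (u 2 2) (u 3 2) B1 B2) = (1, snd (u 1 2) mod 2))"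
    by (rule F5[OF K, rule_format, OF unit_facts(2)[OF u(1)] unit_facts(2)[OF u(2)] unit_facts(2)[OF u(3)] conjI[OF p12 p13]])
  then have D': "(\<exists>B1\<in>BS. \<exists>B2\<in>BS. red 1 (sL K (u 1 2) (u 2 2) B1 B2) = (0,0) \<and> pi2q K (sL K (u 1 2) (u 2 2) B1 B2) = (1, int c))
 \<or> (\<exists>B1\<in>BS. \<exists>B2\<in>BS. red 1 (sL K (u 1 2) (u 3 2) B1 B2) = (0,0) \<and> pi2q K (sL K (u 1 2) (u 3 2) B1 B2) = (1, int c))
 \<or> (\<exists>B1\<in>BS. \<exists>B2\<in>BS. red 1 (sL K (u 2 2) (u 3 2) B1 B2) = (0,0) \<and> pi2q K (sL K (u 2 2) (u 3 2) B1 B2) = (1, int c))"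
    unfolding ci .
  show "\<exists>i\<in>{1,2,3}. \<exists>j\<in>{1,2,3::nat}. i \<noteq> j \<and> (\<exists>bi\<in>Units (ORing K). \<exists>bj\<in>Units (ORing K).
            \<exists>w\<in>Units (ORing K). pcoeff K w = c \<and>
            a i \<otimes>\<^bsub>ORing K\<^esub> bi [^]\<^bsub>ORing K\<^esub> (2 * m) \<oplus>\<^bsub>ORing K\<^esub> a j \<otimes>\<^bsub>ORing K\<^esub> bj [^]\<^bsub>ORing K\<^esub> (2 * m)
              = opi [^]\<^bsub>ORing K\<^esub> (r + 2) \<otimes>\<^bsub>ORing K\<^esub> w)"
    using D'
  proof (elim disjE)
    assume "\<exists>B1\<in>BS. \<exists>B2\<in>BS. red 1 (sL K (u 1 2) (u 2 2) B1 B2) = (0,0) \<and> pi2q K (sL K (u 1 2) (u 2 2) B1 B2) = (1, int c)"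
    then obtain B1 B2 where B: "B1 \<in> BS" "B2 \<in> BS" and P: "red 1 (sL K (u 1 2) (u 2 2) B1 B2) = (0,0)" "pi2q K (sL K (u 1 2) (u 2 2) B1 B2) = (1, int c)" by (rule bex2E)
    show ?thesis
      by (rule pick[of 1 2], simp, simp, simp, unfold a, rule pair5[OF m u(1) u(2) B P])
  next
    assume "\<exists>B1\<in>BS. \<exists>B2\<in>BS. red 1 (sL K (u 1 2) (u 3 2) B1 B2) = (0,0) \<and> pi2q K (sL K (u 1 2) (u 3 2) B1 B2) = (1, int c)"
    then obtain B1 B2 where B: "B1 \<in> BS" "B2 \<in> BS" and P: "red 1 (sL K (u 1 2) (u 3 2) B1 B2) = (0,0)" "pi2q K (sL K (u 1 2) (u 3 2) B1 B2) = (1, int c)" by (rule bex2E)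
    show ?thesis
      by (rule pick[of 1 3], simp, simp, simp, unfold a, rule pair5[OF m u(1) u(3) B P])
  next
    assume "\<exists>B1\<in>BS. \<exists>B2\<in>BS. red 1 (sL K (u 2 2) (u 3 2) B1 B2) = (0,0) \<and> pi2q K (sL K (u 2 2) (u 3 2) B1 B2) = (1, int c)"
    then obtain B1 B2 where B: "B1 \<in> BS" "B2 \<in> BS" and P: "red 1 (sL K (u 2 2) (u 3 2) B1 B2) = (0,0)" "pi2q K (sL K (u 2 2) (u 3 2) B1 B2) = (1, int c)" by (rule bex2E)
    show ?thesis
      by (rule pick[of 2 3], simp, simp, simp, unfold a, rule pair5[OF m u(2) u(3) B P])
  qed
qed

theorem lemma2:
  fixes K :: qfield and m r :: nat
  assumes "odd m" and "m \<ge> 3"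
  defines "R \<equiv> ORing K" and "d \<equiv> 2 * m"
  shows
   "(\<forall>a1 a2 u1 u2. u1 \<in> Units R \<and> u2 \<in> Units R
       \<and> a1 = opi [^]\<^bsub>R\<^esub> r \<otimes>\<^bsub>R\<^esub> u1 \<and> a2 = opi [^]\<^bsub>R\<^esub> r \<otimes>\<^bsub>R\<^esub> u2
       \<and> pcoeff K u1 \<noteq> pcoeff K u2 \<longrightarrow>
       (\<forall>e\<in>{0,1}. \<exists>b1\<in>Units R. \<exists>b2\<in>Units R. \<exists>w\<in>Units R. pcoeff K w = e \<and>
          a1 \<otimes>\<^bsub>R\<^esub> b1 [^]\<^bsub>R\<^esub> d \<oplus>\<^bsub>R\<^esub> a2 \<otimes>\<^bsub>R\<^esub> b2 [^]\<^bsub>R\<^esub> d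
            = opi [^]\<^bsub>R\<^esub> (r + 1) \<otimes>\<^bsub>R\<^esub> w))
  \<and> (\<forall>a1 a2 u1 u2. u1 \<in> Units R \<and> u2 \<in> Units R
       \<and> a1 = opi [^]\<^bsub>R\<^esub> r \<otimes>\<^bsub>R\<^esub> u1 \<and> a2 = opi [^]\<^bsub>R\<^esub> r \<otimes>\<^bsub>R\<^esub> u2
       \<and> pcoeff K u1 = pcoeff K u2 \<longrightarrow>
       (\<exists>b1\<in>Units R. \<exists>b2\<in>Units R.
          pord K (a1 \<otimes>\<^bsub>R\<^esub> b1 [^]\<^bsub>R\<^esub> d \<oplus>\<^bsub>R\<^esub> a2 \<otimes>\<^bsub>R\<^esub> b2 [^]\<^bsub>R\<^esub> d)
            = enat (r + 2)))
  \<and> (\<forall>a1 a2 u1 u2. u1 \<in> Units R \<and> u2 \<in> Units R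
       \<and> a1 = opi [^]\<^bsub>R\<^esub> r \<otimes>\<^bsub>R\<^esub> u1 \<and> a2 = opi [^]\<^bsub>R\<^esub> r \<otimes>\<^bsub>R\<^esub> u2
       \<and> pcoeff K u1 = pcoeff K u2 \<longrightarrow>
       (\<exists>b1\<in>Units R. \<exists>b2\<in>Units R.
          pord K (a1 \<otimes>\<^bsub>R\<^esub> b1 [^]\<^bsub>R\<^esub> d \<oplus>\<^bsub>R\<^esub> a2 \<otimes>\<^bsub>R\<^esub> b2 [^]\<^bsub>R\<^esub> d)
            \<ge> enat (r + 3)))
  \<and> (K \<in> {Q2_sqrtm1, Q2_sqrtm5} \<longrightarrow>
       (\<forall>a u :: nat \<Rightarrow> oelt. (\<forall>i\<in>{1,2,3}. u i \<in> Units R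
            \<and> a i = opi [^]\<^bsub>R\<^esub> r \<otimes>\<^bsub>R\<^esub> u i \<and> pcoeff K (u i) = pcoeff K (u 1)) \<longrightarrow>
         (\<exists>i\<in>{1,2,3}. \<exists>j\<in>{1,2,3::nat}. i \<noteq> j \<and> (\<exists>bi\<in>Units R. \<exists>bj\<in>Units R.
            pord K (a i \<otimes>\<^bsub>R\<^esub> bi [^]\<^bsub>R\<^esub> d \<oplus>\<^bsub>R\<^esub> a j \<otimes>\<^bsub>R\<^esub> bj [^]\<^bsub>R\<^esub> d)
              \<ge> enat (r + 4)))))
  \<and> (K \<in> {Q2_sqrt2, Q2_sqrt10, Q2_sqrtm2, Q2_sqrtm10} \<longrightarrow>
       (\<forall>(a :: nat \<Rightarrow> oelt) u c. (\<forall>i\<in>{1,2,3}. u i \<in> Units R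
            \<and> a i = opi [^]\<^bsub>R\<^esub> r \<otimes>\<^bsub>R\<^esub> u i \<and> pcoeff K (u i) = c) \<longrightarrow>
         (\<exists>i\<in>{1,2,3}. \<exists>j\<in>{1,2,3::nat}. i \<noteq> j \<and> (\<exists>bi\<in>Units R. \<exists>bj\<in>Units R.
            \<exists>w\<in>Units R. pcoeff K w = c \<and>
            a i \<otimes>\<^bsub>R\<^esub> bi [^]\<^bsub>R\<^esub> d \<oplus>\<^bsub>R\<^esub> a j \<otimes>\<^bsub>R\<^esub> bj [^]\<^bsub>R\<^esub> d
              = opi [^]\<^bsub>R\<^esub> (r + 2) \<otimes>\<^bsub>R\<^esub> w))))"
proof -
  show ?thesis
    unfolding R_def d_def
    by (intro conjI part1 part2 part3 part4 part5 assms(1))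
qed


end
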